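(* There is an absolute constant $C$ with $0<C<175$ such that the following holds. Let $Q=\{q_1,\dots,q_N\}\subset\mathcal S^{d-1}$, let $\alpha\in\mathbb{R}_+^N$ with $\sum_i\alpha_i=1$, and at each time $t\ge0$ independently draw $q_t=q_i$ with probability $\alpha_i$. Preferences evolve as $\tilde p_{t+1}=p_t+\eta_t(p_t^\top q_t)q_t$, $p_{t+1}=\tilde p_{t+1}/\|\tilde p_{t+1}\|_2$, with decreasing step size $\eta_t=\frac{\eta}{t+s}$. Let $\Sigma=\sum_{i=1}^N\alpha_iq_iq_i^\top$ with eigenvalues $\lambda_1\ge\lambda_2\ge\cdots$ and let $v_1$ be a unit eigenvector of $\Sigma$ for $\lambda_1$. Let $M=\max\{\max_{j\in[N]}\|q_jq_j^\top-\Sigma\|,\lambda_1\}$ (operator norm). Let $T\ge1$, $\delta\in(0,1)$, and assume $v_1^\top p_0\ge\sqrt2/2$, $\eta\ge\frac{8}{\lambda_1-\lambda_2}$ and $s\ge 1+2C^2\eta^2M^2\log(2CMT\eta/\delta)$. Assume further that the support $\{q_i:\alpha_i>0\}$ is self-aligned with respect to both $v_1$ and $p_0$. Then with probability at least $1-\delta$, \[R(T):=\sum_{t=0}^{T-1}(1-p_t^\top p_0)\le 4e^2(s+2)\Big(1+\log\big(\tfrac{T+s}{s}\big)\Big)+T\|v_1-p_0\|.\]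
   Context: $\mathcal S^{d-1}$ is the unit sphere in $\mathbb{R}^d$; $p_0\in\mathcal S^{d-1}$ is the initial preference; $\eta,s$ are positive integers. A set of vectors $u_1,\dots,u_k$ is self-aligned with respect to a vector $v$ if $u_i^\top u_j\ge0$ for all pairs $i,j$ and $u_i^\top v\ge0$ for all $i$. $R(T)$ is the regret for the stationary-preference reward $r_t=p_t^\top p_0$ relative to the maximal reward $1$. *)

theory Defs
  imports "HOL-Probability.Probability"
begin

text \<open>Vectors of R^d are represented as functions nat => real vanishing at indices >= d;
  d\<times>d matrices as functions nat => nat => real (only entries i,j < d matter).
  This keeps the dimension d a term, so that the constant C can be absolute.\<close>

definition vecs :: "nat \<Rightarrow> (nat \<Rightarrow> real) set" where
  "vecs d = {x. \<forall>i\<ge>d. x i = 0}"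

definition ip :: "nat \<Rightarrow> (nat \<Rightarrow> real) \<Rightarrow> (nat \<Rightarrow> real) \<Rightarrow> real" where
  "ip d x y = (\<Sum>i<d. x i * y i)"

definition vnorm :: "nat \<Rightarrow> (nat \<Rightarrow> real) \<Rightarrow> real" where
  "vnorm d x = sqrt (ip d x x)"

definition sphere_d :: "nat \<Rightarrow> (nat \<Rightarrow> real) set" where
  "sphere_d d = {x \<in> vecs d. vnorm d x = 1}"

definition mulv :: "nat \<Rightarrow> (nat \<Rightarrow> nat \<Rightarrow> real) \<Rightarrow> (nat \<Rightarrow> real) \<Rightarrow> (nat \<Rightarrow> real)" where
  "mulv d A x = (\<lambda>i. if i < d then (\<Sum>j<d. A i j * x j) else 0)"

definition opnorm :: "nat \<Rightarrow> (nat \<Rightarrow> nat \<Rightarrow> real) \<Rightarrow> real" where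
  "opnorm d A = Sup {vnorm d (mulv d A x) | x. x \<in> vecs d \<and> vnorm d x \<le> 1}"

definition outer :: "(nat \<Rightarrow> real) \<Rightarrow> (nat \<Rightarrow> real) \<Rightarrow> (nat \<Rightarrow> nat \<Rightarrow> real)" where
  "outer x y = (\<lambda>i j. x i * y j)"

definition covm :: "nat \<Rightarrow> (nat \<Rightarrow> real) \<Rightarrow> (nat \<Rightarrow> nat \<Rightarrow> real) \<Rightarrow> (nat \<Rightarrow> nat \<Rightarrow> real)" where
  "covm N \<alpha> q = (\<lambda>i j. \<Sum>k<N. \<alpha> k * q k i * q k j)"

definition sorted_eigenvalues :: "nat \<Rightarrow> (nat \<Rightarrow> nat \<Rightarrow> real) \<Rightarrow> (nat \<Rightarrow> real) \<Rightarrow> bool" where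
  "sorted_eigenvalues d A lam \<longleftrightarrow>
     (\<exists>U :: nat \<Rightarrow> nat \<Rightarrow> real.
        (\<forall>k<d. U k \<in> vecs d \<and> mulv d A (U k) = (\<lambda>i. lam k * U k i)) \<and>
        (\<forall>k<d. \<forall>l<d. ip d (U k) (U l) = (if k = l then 1 else 0))) \<and>
     (\<forall>k l. k \<le> l \<and> l < d \<longrightarrow> lam l \<le> lam k)"

definition self_aligned :: "nat \<Rightarrow> (nat \<Rightarrow> nat \<Rightarrow> real) \<Rightarrow> nat set \<Rightarrow> (nat \<Rightarrow> real) \<Rightarrow> bool" where
  "self_aligned d q S v \<longleftrightarrow>
     (\<forall>i\<in>S. \<forall>j\<in>S. ip d (q i) (q j) \<ge> 0) \<and> (\<forall>i\<in>S. ip d (q i) v \<ge> 0)"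

text \<open>Preference dynamics driven by the index sequence \<omega> (q_t = q (\<omega> t)):
  p_{t+1} = normalize (p_t + eta/(t+s) (p_t^T q_t) q_t).\<close>
primrec pref :: "nat \<Rightarrow> (nat \<Rightarrow> nat \<Rightarrow> real) \<Rightarrow> (nat \<Rightarrow> real) \<Rightarrow> nat \<Rightarrow> nat \<Rightarrow> (nat \<Rightarrow> nat)
                  \<Rightarrow> nat \<Rightarrow> (nat \<Rightarrow> real)" where
  "pref d q p0 \<eta> s \<omega> 0 = p0"
| "pref d q p0 \<eta> s \<omega> (Suc t) =
     (let p = pref d q p0 \<eta> s \<omega> t;
          qt = q (\<omega> t);
          pt = (\<lambda>i. p i + (real \<eta> / (real t + real s)) * ip d p qt * qt i)
      in (\<lambda>i. pt i / vnorm d pt))"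

definition regret :: "nat \<Rightarrow> (nat \<Rightarrow> nat \<Rightarrow> real) \<Rightarrow> (nat \<Rightarrow> real) \<Rightarrow> nat \<Rightarrow> nat \<Rightarrow> (nat \<Rightarrow> nat)
                       \<Rightarrow> nat \<Rightarrow> real" where
  "regret d q p0 \<eta> s \<omega> T = (\<Sum>t<T. 1 - ip d (pref d q p0 \<eta> s \<omega> t) p0)"

end

theory Submission
  imports Defs "Jordan_Normal_Form.Determinant"
begin


lemma tau_upper:
  fixes a h r t :: real
  assumes a0: "0 \<le> a" and a1: "a \<le> 1/1000" and h0: "0 \<le> h" and h1: "h \<le> 1"
    and rt: "r^2 \<le> t" and t2: "t \<le> 2" and hr: "0 \<le> h + r"
  shows "(t + 2*a*(h*r + r^2) + a^2*(h+r)^2*(1-h^2)) / (1 + a*(h*(h+r)))^2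
         \<le> t + 2*a*(h*r+r^2) - 2*a*t*(h*(h+r)) + 100*a^2"
proof -
  have r15: "\<bar>r\<bar> \<le> 3/2"
  proof -
    have "r^2 \<le> (3/2)^2" using rt t2 by (simp add: power2_eq_square)
    thus ?thesis using abs_le_square_iff[of r "3/2::real"] by simp
  qed
  have t0: "0 \<le> t" using rt by (meson order_trans zero_le_power2)
  define B where "B = h*(h+r)"
  define P where "P = h*r + r^2"
  have B0: "0 \<le> B" using h0 hr by (simp add: B_def)
  have hr2: "h + r \<le> 5/2" using h1 r15 by linarith
  have B1: "B \<le> 5/2"
  proof -
    have "h*(h+r) \<le> 1*(h+r)" using h1 hr by (intro mult_right_mono) auto
    thus ?thesis using hr2 by (simp add: B_def)
  qed
  have hrb: "\<bar>h*r\<bar> \<le> 3/2"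
  proof -
    have "\<bar>h*r\<bar> = h * \<bar>r\<bar>" using h0 by (simp add: abs_mult)
    also have "\<dots> \<le> 1 * (3/2)" using h0 h1 r15 by (intro mult_mono) auto
    finally show ?thesis by simp
  qed
  have Pb: "\<bar>P\<bar> \<le> 7/2"
  proof -
    have "\<bar>h*r + r^2\<bar> \<le> \<bar>h*r\<bar> + r^2" using abs_triangle_ineq[of "h*r" "r^2"] by simp
    thus ?thesis using hrb rt t2 unfolding P_def by linarith
  qed
  have BP: "B*P \<ge> -(35/4)"
  proof -
    have "\<bar>B*P\<bar> \<le> (5/2)*(7/2)" unfolding abs_mult using B0 B1 Pb
      by (intro mult_mono) auto
    thus ?thesis by linarith
  qed
  have B2: "B^2 \<le> 25/4" using power_mono[OF B1 B0, of 2] by (simp add: power2_eq_square)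
  have tB2: "t*B^2 \<le> 2*(25/4)" using t0 t2 B2 by (intro mult_mono) auto
  have hr2sq: "(h+r)^2 \<le> 25/4" using power_mono[OF hr2 hr, of 2] by (simp add: power2_eq_square)
  have q1: "(h+r)^2*(1-h^2) \<le> 25/4"
  proof -
    have "(h+r)^2*(1-h^2) \<le> (h+r)^2 * 1" using h0 h1
      by (intro mult_left_mono) (auto simp: power_le_one)
    thus ?thesis using hr2sq by simp
  qed
  define E1 where "E1 = 100 + 4*B*P - 3*t*B^2 - (h+r)^2*(1-h^2)"
  have E1: "E1 \<ge> 21" unfolding E1_def using BP tB2 q1 by linarith
  define E2 where "E2 = 200*B + 2*B^2*P - 2*t*B^3"
  have B2P: "B^2*P \<ge> -(25/4)*(7/2)"
  proof -
    have "\<bar>B^2*P\<bar> \<le> (25/4)*(7/2)" unfolding abs_mult using B2 Pb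
      by (intro mult_mono) auto
    thus ?thesis by linarith
  qed
  have B3: "t*B^3 \<le> 2*(125/8)"
  proof -
    have "B^3 \<le> (5/2)^3" using B0 B1 by (intro power_mono) auto
    hence "B^3 \<le> 125/8" by (simp add: power3_eq_cube)
    thus ?thesis using t0 t2 B0 by (intro mult_mono) auto
  qed
  have E2: "E2 \<ge> -110" unfolding E2_def using B0 B2P B3 by linarith
  have "0 \<le> a*B" using a0 B0 by simp
  hence D0: "0 < (1 + a*B)^2" by (simp add: add_pos_nonneg)
  have id: "(t + 2*a*P - 2*a*t*B + 100*a^2) * (1 + a*B)^2 - (t + 2*a*P + a^2*(h+r)^2*(1-h^2))
      = a^2*E1 + a^3*E2 + 100*a^4*B^2"
    unfolding E1_def E2_def by (simp add: algebra_simps power2_eq_square power3_eq_cube power4_eq_xxxx)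
  have eq3: "a^3*E2 = a^2*(a*E2)" by (simp add: power2_eq_square power3_eq_cube)
  have "a*(-110) \<le> a*E2" using a0 E2 by (intro mult_left_mono) auto
  hence "a^2*(a*(-110)) \<le> a^2*(a*E2)" by (rule mult_left_mono) auto
  hence F1: "a^3*E2 \<ge> -110*a^3" using eq3 by (simp add: power2_eq_square power3_eq_cube)
  have "a^2*21 \<le> a^2*E1" by (rule mult_left_mono[OF E1]) simp
  hence F2: "a^2*E1 \<ge> 21*a^2" by (simp add: mult.commute)
  have F3: "21*a^2 - 110*a^3 \<ge> 0"
  proof -
    have "a^2*(21 - 110*a) \<ge> 0" using a1 by simp
    thus ?thesis by (simp add: power2_eq_square power3_eq_cube algebra_simps)
  qed
  have F4: "100*a^4*B^2 \<ge> 0" by simp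
  have "a^2*E1 + a^3*E2 + 100*a^4*B^2 \<ge> 0" using F1 F2 F3 F4 by linarith
  hence "(t + 2*a*P + a^2*(h+r)^2*(1-h^2)) \<le> (t + 2*a*P - 2*a*t*B + 100*a^2) * (1 + a*B)^2"
    using id by linarith
  hence "(t + 2*a*P + a^2*(h+r)^2*(1-h^2)) / (1 + a*B)^2 \<le> t + 2*a*P - 2*a*t*B + 100*a^2"
    using D0 by (simp add: divide_le_eq)
  thus ?thesis unfolding B_def P_def .
qed

lemma exp_le_quad: fixes y :: real assumes "y \<le> 1" shows "exp y \<le> 1 + y + y^2"
proof (cases "0 \<le> y")
  case True thus ?thesis using exp_bound assms by blast
next
  case False
  define u where "u = -y"
  have u0: "0 \<le> u" using False u_def by simp
  have l: "1 + u + u^2/2 \<le> exp u" using exp_lower_Taylor_quadratic[OF u0] .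
  have pos: "0 < 1 + u + u^2/2" using u0 by (simp add: add_pos_nonneg)
  have "(1 - u + u^2) * (1 + u + u^2/2) = 1 + u^2/2 + u^3/2 + u^4/2"
    by (simp add: field_simps power2_eq_square power3_eq_cube power4_eq_xxxx)
  also have "\<dots> \<ge> 1" using u0 by simp
  finally have "1 \<le> (1 - u + u^2) * (1 + u + u^2/2)" .
  moreover have "(1 - u + u^2) * (1 + u + u^2/2) \<le> (1 - u + u^2) * exp u"
  proof (rule mult_left_mono[OF l])
    have "0 \<le> (u - 1/2)^2 + 3/4" by simp
    also have "(u - 1/2)^2 + 3/4 = 1 - u + u^2" by (simp add: power2_eq_square algebra_simps)
    finally show "0 \<le> 1 - u + u^2" .
  qed
  ultimately have "1 \<le> (1 - u + u^2) * exp u" by linarith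
  hence "exp (-u) \<le> 1 - u + u^2"
    by (simp add: exp_minus field_simps)
  thus ?thesis by (simp add: u_def)
qed

definition taup :: "real \<Rightarrow> real \<Rightarrow> real \<Rightarrow> real \<Rightarrow> real" where
  "taup a h r t = (t + 2*a*(h*r + r^2) + a^2*(h+r)^2*(1-h^2)) / (1 + a*(h*(h+r)))^2"

lemma tau_lower:
  fixes a h r t :: real
  assumes a0: "0 \<le> a" and a1: "a \<le> 1/1000" and h0: "0 \<le> h" and h1: "h \<le> 1"
    and rt: "r^2 \<le> (1-h^2)*t" and t2: "t \<le> 2" and hr: "0 \<le> h + r" and t0: "0 \<le> t"
  shows "taup a h r t \<ge> t - 2*a*\<bar>r\<bar> - 5*a*t - 15*a^2"
proof -
  have "0 \<le> h^2*t" using t0 by simp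
  hence rt': "r^2 \<le> t" using rt by (simp add: algebra_simps)
  have r15: "\<bar>r\<bar> \<le> 3/2"
  proof -
    have "r^2 \<le> (3/2)^2" using rt' t2 by (simp add: power2_eq_square)
    thus ?thesis using abs_le_square_iff[of r "3/2::real"] by simp
  qed
  define B where "B = h*(h+r)"
  define G where "G = h + r"
  define Nm where "Nm = t + 2*a*(h*r + r^2) + a^2*(h+r)^2*(1-h^2)"
  have B0: "0 \<le> B" using h0 hr by (simp add: B_def)
  have hr2: "h + r \<le> 5/2" using h1 r15 by linarith
  have B1: "B \<le> 5/2"
  proof -
    have "h*(h+r) \<le> 1*(h+r)" using h1 hr by (intro mult_right_mono) auto
    thus ?thesis using hr2 by (simp add: B_def)
  qed
  have hrb: "\<bar>h*r\<bar> \<le> \<bar>r\<bar>"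
  proof -
    have "\<bar>h*r\<bar> = h * \<bar>r\<bar>" using h0 by (simp add: abs_mult)
    also have "\<dots> \<le> 1 * \<bar>r\<bar>" using h0 h1 by (intro mult_right_mono) auto
    finally show ?thesis by simp
  qed
  have Nm0: "Nm \<ge> 0"
  proof -
    have eq: "Nm = t + 2*r*(a*G) + (1-h^2)*(a*G)^2"
      unfolding Nm_def G_def by (simp add: algebra_simps power2_eq_square)
    have hh: "0 \<le> 1 - h^2" using h0 h1 by (simp add: power_le_one)
    show ?thesis
    proof (cases "t = 0")
      case True
      hence "r = 0" using rt' by simp
      thus ?thesis using eq hh True by simp
    next
      case False
      hence tp: "t > 0" using t0 by simp
      have "t * (t + 2*r*(a*G) + (1-h^2)*(a*G)^2) = (t + r*(a*G))^2 + (t*(1-h^2) - r^2)*(a*G)^2"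
        by (simp add: algebra_simps power2_eq_square)
      also have "\<dots> \<ge> 0" using rt by (simp add: mult.commute)
      finally have "t * Nm \<ge> 0" using eq by simp
      thus ?thesis using tp by (simp add: zero_le_mult_iff)
    qed
  qed
  have NmL: "Nm \<ge> t + 2*a*h*r"
  proof -
    have "0 \<le> 2*a*r^2" using a0 by simp
    moreover have "0 \<le> a^2*(h+r)^2*(1-h^2)" using h0 h1 by (simp add: power_le_one)
    ultimately show ?thesis unfolding Nm_def by (simp add: algebra_simps)
  qed
  have aB: "0 \<le> a*B" using a0 B0 by simp
  have aB1: "a*B \<le> 1/400" using a1 B1 a0 B0
  proof -
    have "a*B \<le> (1/1000)*(5/2)" using a1 B1 a0 B0 by (intro mult_mono) auto
    thus ?thesis by simp
  qed
  have inv: "1 / (1 + a*B)^2 \<ge> 1 - 2*(a*B)"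
  proof -
    have "(1 - 2*(a*B)) * (1 + a*B)^2 = 1 - 3*(a*B)^2 - 2*(a*B)^3"
      by (simp add: algebra_simps power2_eq_square power3_eq_cube)
    also have "\<dots> \<le> 1"
    proof -
      have "0 \<le> (a*B)^3" using aB by simp
      moreover have "0 \<le> (a*B)^2" by simp
      ultimately show ?thesis by linarith
    qed
    finally show ?thesis using aB by (simp add: le_divide_eq add_pos_nonneg)
  qed
  have "taup a h r t = Nm * (1 / (1 + a*B)^2)" unfolding taup_def Nm_def B_def by simp
  also have "\<dots> \<ge> Nm * (1 - 2*(a*B))" using inv Nm0 by (intro mult_left_mono) auto
  finally have s1: "taup a h r t \<ge> Nm * (1 - 2*(a*B))" .
  have "Nm * (1 - 2*(a*B)) \<ge> (t + 2*a*h*r) * (1 - 2*(a*B))" using NmL aB1 by (intro mult_right_mono) auto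
  moreover have "(t + 2*a*h*r) * (1 - 2*(a*B)) = t + 2*a*(h*r) - 2*a*t*B - 4*a^2*(B*(h*r))"
    by (simp add: algebra_simps power2_eq_square)
  moreover have "2*a*(h*r) \<ge> -2*a*\<bar>r\<bar>"
  proof -
    have "-(h*r) \<le> \<bar>r\<bar>" using hrb by linarith
    hence "a*(-(h*r)) \<le> a*\<bar>r\<bar>" using a0 by (intro mult_left_mono) auto
    thus ?thesis by simp
  qed
  moreover have "2*a*t*B \<le> 5*a*t"
  proof -
    have "a*t*B \<le> a*t*(5/2)" using B1 a0 t0 by (intro mult_left_mono) auto
    thus ?thesis by simp
  qed
  moreover have "4*a^2*(B*(h*r)) \<le> 15*a^2"
  proof -
    have "\<bar>B*(h*r)\<bar> \<le> (5/2)*(3/2)" unfolding abs_mult[of B] using B0 B1 hrb r15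
      by (intro mult_mono) auto
    hence "B*(h*r) \<le> 15/4" by simp
    hence "a^2*(B*(h*r)) \<le> a^2*(15/4)" by (intro mult_left_mono) auto
    thus ?thesis by simp
  qed
  ultimately show ?thesis using s1 by linarith
qed

lemma tau_upper':
  fixes a h r t :: real
  assumes a0: "0 \<le> a" and a1: "a \<le> 1/1000" and h0: "0 \<le> h" and h1: "h \<le> 1"
    and rt: "r^2 \<le> t" and t2: "t \<le> 2" and hr: "0 \<le> h + r"
  shows "taup a h r t \<le> t + 2*a*(h*r+r^2) - 2*a*t*(h*(h+r)) + 100*a^2"
  using tau_upper[OF assms] unfolding taup_def .

lemma sq3: fixes x y z :: real shows "(x+y+z)^2 \<le> 3*(x^2+y^2+z^2)"
proof -
  have "0 \<le> (x-y)^2 + (y-z)^2 + (x-z)^2" by simp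
  thus ?thesis by (simp add: power2_eq_square algebra_simps)
qed

lemma step_point:
  fixes h r t \<eta> n :: real
  assumes h0: "0 \<le> h" and h1: "h \<le> 1" and rt: "r^2 \<le> (1-h^2)*t" and hr: "0 \<le> h + r"
    and t0: "0 \<le> t" and t2: "t \<le> 2" and eta: "1 \<le> \<eta>" and n1: "1 \<le> n" and an: "\<eta>/n \<le> 1/1000"
  defines "X \<equiv> (n+1) * taup (\<eta>/n) h r t - n*t"
  shows "X \<le> (n+1)*(t + 2*(\<eta>/n)*(h*r+r^2) - 2*(\<eta>/n)*t*(h*h + h*r) + 100*(\<eta>/n)^2) - n*t"
    and "X^2 \<le> 48*\<eta>^2*r^2 + 726*\<eta>^2*t + 120000*\<eta>^4/n^2"
    and "X / (300*\<eta>^2) \<le> 1"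
proof -
  define a where "a = \<eta>/n"
  have a0: "0 \<le> a" using eta n1 by (simp add: a_def)
  have a1: "a \<le> 1/1000" using an by (simp add: a_def)
  have "0 \<le> h^2*t" using t0 by simp
  hence rt': "r^2 \<le> t" using rt by (simp add: algebra_simps)
  have r15: "\<bar>r\<bar> \<le> 3/2"
  proof -
    have "r^2 \<le> (3/2)^2" using rt' t2 by (simp add: power2_eq_square)
    thus ?thesis using abs_le_square_iff[of r "3/2::real"] by simp
  qed
  have U: "taup a h r t \<le> t + 2*a*(h*r+r^2) - 2*a*t*(h*(h+r)) + 100*a^2"
    by (rule tau_upper'[OF a0 a1 h0 h1 rt' t2 hr])
  have L: "taup a h r t \<ge> t - 2*a*\<bar>r\<bar> - 5*a*t - 15*a^2"
    by (rule tau_lower[OF a0 a1 h0 h1 rt t2 hr t0])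
  have n0: "0 < n" using n1 by simp
  show "X \<le> (n+1)*(t + 2*(\<eta>/n)*(h*r+r^2) - 2*(\<eta>/n)*t*(h*h + h*r) + 100*(\<eta>/n)^2) - n*t"
  proof -
    have "(n+1) * taup a h r t \<le> (n+1) * (t + 2*a*(h*r+r^2) - 2*a*t*(h*(h+r)) + 100*a^2)"
      using U n0 by (intro mult_left_mono) auto
    thus ?thesis unfolding X_def a_def by (simp add: algebra_simps)
  qed
  have B0: "0 \<le> h*(h+r)" using h0 hr by simp
  have Up: "taup a h r t - t \<le> 2*a*\<bar>r\<bar> + 5*a*t + 100*a^2"
  proof -
    have "2*a*t*(h*(h+r)) \<ge> 0" using a0 t0 B0 by simp
    moreover have "a*(h*r) \<le> a*\<bar>r\<bar>"
    proof -
      have "h*r \<le> \<bar>h*r\<bar>" by simp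
      also have "\<bar>h*r\<bar> = h*\<bar>r\<bar>" using h0 by (simp add: abs_mult)
      also have "\<dots> \<le> 1*\<bar>r\<bar>" using h1 by (intro mult_right_mono) auto
      finally show ?thesis using a0 by (intro mult_left_mono) auto
    qed
    moreover have "a*r^2 \<le> a*t" using rt' a0 by (intro mult_left_mono) auto
    moreover have "a*t \<ge> 0" using a0 t0 by simp
    ultimately show ?thesis using U by (simp add: algebra_simps)
  qed
  have absd: "\<bar>taup a h r t - t\<bar> \<le> 2*a*\<bar>r\<bar> + 5*a*t + 100*a^2"
    using Up L zero_le_power2[of a] unfolding abs_le_iff by (intro conjI; linarith)
  have na: "(n+1)*a \<le> 2*\<eta>" unfolding a_def using n1 eta
    by (simp add: field_simps)
  have na2: "(n+1)*a^2 \<le> 2*\<eta>^2/n"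
  proof -
    have "(n+1)*a^2 = ((n+1)*a)*a" by (simp add: power2_eq_square)
    also have "\<dots> \<le> (2*\<eta>)*a" using na a0 by (intro mult_right_mono) auto
    finally show ?thesis unfolding a_def by (simp add: power2_eq_square)
  qed
  have Xeq: "X = (n+1)*(taup a h r t - t) + t" unfolding X_def a_def by (simp add: algebra_simps)
  define A where "A = 4*\<eta>*\<bar>r\<bar> + 11*\<eta>*t + 200*\<eta>^2/n"
  have absX: "\<bar>X\<bar> \<le> A"
  proof -
    have "\<bar>X\<bar> \<le> (n+1)*\<bar>taup a h r t - t\<bar> + t"
    proof -
      have "\<bar>(n+1)*(taup a h r t - t) + t\<bar> \<le> \<bar>(n+1)*(taup a h r t - t)\<bar> + \<bar>t\<bar>" by (rule abs_triangle_ineq)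
      also have "\<bar>(n+1)*(taup a h r t - t)\<bar> = (n+1)*\<bar>taup a h r t - t\<bar>" using n0 by (simp add: abs_mult)
      finally show ?thesis using t0 Xeq by simp
    qed
    also have "\<dots> \<le> (n+1)*(2*a*\<bar>r\<bar> + 5*a*t + 100*a^2) + t"
      using absd n0 by (simp add: mult_left_mono)
    also have "\<dots> = 2*((n+1)*a)*\<bar>r\<bar> + 5*((n+1)*a)*t + 100*((n+1)*a^2) + t"
      by (simp add: algebra_simps)
    also have "\<dots> \<le> 2*(2*\<eta>)*\<bar>r\<bar> + 5*(2*\<eta>)*t + 100*(2*\<eta>^2/n) + t"
    proof -
      have "((n+1)*a)*\<bar>r\<bar> \<le> (2*\<eta>)*\<bar>r\<bar>" using na by (intro mult_right_mono) auto
      moreover have "((n+1)*a)*t \<le> (2*\<eta>)*t" using na t0 by (intro mult_right_mono) auto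
      ultimately show ?thesis using na2 by linarith
    qed
    also have "\<dots> \<le> A" unfolding A_def using eta t0
    proof -
      have "t \<le> \<eta>*t" using eta t0 by (simp add: mult_le_cancel_right1)
      thus "2*(2*\<eta>)*\<bar>r\<bar> + 5*(2*\<eta>)*t + 100*(2*\<eta>^2/n) + t \<le> 4*\<eta>*\<bar>r\<bar> + 11*\<eta>*t + 200*\<eta>^2/n"
        by simp
    qed
    finally show ?thesis .
  qed
  have A0: "0 \<le> A" unfolding A_def using eta t0 n0 by simp
  have "X^2 \<le> A^2" using absX A0 by (simp add: abs_le_square_iff[symmetric])
  also have "A^2 \<le> 3*((4*\<eta>*\<bar>r\<bar>)^2 + (11*\<eta>*t)^2 + (200*\<eta>^2/n)^2)"
    unfolding A_def by (rule sq3)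
  also have "\<dots> = 48*\<eta>^2*r^2 + 363*\<eta>^2*t^2 + 120000*\<eta>^4/n^2"
    by (simp add: power_mult_distrib power_divide algebra_simps)
  also have "\<dots> \<le> 48*\<eta>^2*r^2 + 726*\<eta>^2*t + 120000*\<eta>^4/n^2"
  proof -
    have "t^2 \<le> 2*t" using t0 t2 by (simp add: power2_eq_square mult_right_mono)
    hence "363*\<eta>^2*t^2 \<le> 363*\<eta>^2*(2*t)" by (intro mult_left_mono) auto
    thus ?thesis by simp
  qed
  finally show "X^2 \<le> 48*\<eta>^2*r^2 + 726*\<eta>^2*t + 120000*\<eta>^4/n^2" .
  have "X \<le> A" using absX by simp
  also have "A \<le> 28*\<eta> + 200*\<eta>^2"
  proof -
    have "4*\<eta>*\<bar>r\<bar> \<le> 4*\<eta>*(3/2)" using r15 eta by (intro mult_left_mono) auto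
    moreover have "11*\<eta>*t \<le> 11*\<eta>*2" using t2 eta by (intro mult_left_mono) auto
    moreover have "200*\<eta>^2/n \<le> 200*\<eta>^2" using n1 eta by (simp add: divide_le_eq mult_le_cancel_left1)
    ultimately show ?thesis unfolding A_def by linarith
  qed
  also have "\<dots> \<le> 300*\<eta>^2"
  proof -
    have "\<eta> \<le> \<eta>^2" using eta by (simp add: power2_eq_square)
    thus ?thesis using eta by linarith
  qed
  finally show "X / (300*\<eta>^2) \<le> 1" using eta by (simp add: divide_le_eq)
qed

lemma mgf_step:
  fixes I :: "'i set" and \<alpha> h r :: "'i \<Rightarrow> real" and t l0 l1 \<eta> n :: real
  assumes fin: "finite I" and \<alpha>0: "\<And>i. i \<in> I \<Longrightarrow> 0 \<le> \<alpha> i" and \<alpha>1: "sum \<alpha> I = 1"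
    and hb: "\<And>i. i \<in> I \<Longrightarrow> 0 \<le> h i \<and> h i \<le> 1 \<and> (r i)^2 \<le> (1 - (h i)^2)*t \<and> 0 \<le> h i + r i"
    and t0: "0 \<le> t" and t2: "t \<le> 2"
    and Eh: "(\<Sum>i\<in>I. \<alpha> i * (h i * h i)) = l0" and Ehr: "(\<Sum>i\<in>I. \<alpha> i * (h i * r i)) = 0"
    and Er: "(\<Sum>i\<in>I. \<alpha> i * (r i)^2) \<le> l1 * t"
    and eta: "1 \<le> \<eta>" and gap: "8 \<le> \<eta>*(l0 - l1)" and n1: "1 \<le> n" and an: "\<eta>/n \<le> 1/1000"
  shows "(\<Sum>i\<in>I. \<alpha> i * exp ((n+1) * taup (\<eta>/n) (h i) (r i) t / (300*\<eta>^2)))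
          \<le> exp (n*t/(300*\<eta>^2) + 2/n)"
proof -
  define c where "c = 300*\<eta>^2"
  have c0: "0 < c" using eta by (simp add: c_def)
  define a where "a = \<eta>/n"
  have a0: "0 \<le> a" using eta n1 by (simp add: a_def)
  have n0: "0 < n" using n1 by simp
  define X where "X i = (n+1) * taup (\<eta>/n) (h i) (r i) t - n*t" for i
  have SP: "X i \<le> (n+1)*(t + 2*a*(h i*r i+(r i)^2) - 2*a*t*(h i*h i + h i*r i) + 100*a^2) - n*t"
     "(X i)^2 \<le> 48*\<eta>^2*(r i)^2 + 726*\<eta>^2*t + 120000*\<eta>^4/n^2"
     "X i / c \<le> 1" if "i \<in> I" for i
    using step_point[of "h i" "r i" t \<eta> n] hb[OF that] t0 t2 eta n1 an
    unfolding X_def a_def c_def by auto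
  have rt: "(r i)^2 \<le> t" if "i \<in> I" for i
  proof -
    have "0 \<le> (h i)^2*t" using t0 by simp
    thus ?thesis using hb[OF that] by (simp add: algebra_simps)
  qed
  have Ert: "(\<Sum>i\<in>I. \<alpha> i * (r i)^2) \<le> t"
  proof -
    have "(\<Sum>i\<in>I. \<alpha> i * (r i)^2) \<le> (\<Sum>i\<in>I. \<alpha> i * t)"
      using rt \<alpha>0 by (intro sum_mono mult_left_mono) auto
    also have "\<dots> = t" using \<alpha>1 by (simp add: sum_distrib_right[symmetric])
    finally show ?thesis .
  qed
  have l01: "0 \<le> l0 - l1"
  proof (rule ccontr)
    assume "\<not> 0 \<le> l0 - l1"
    hence "\<eta>*(l0 - l1) \<le> 0" using eta by (simp add: mult_nonneg_nonpos)
    thus False using gap by simp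
  qed
  have EX: "(\<Sum>i\<in>I. \<alpha> i * X i) \<le> -15*t + 200*\<eta>^2/n"
  proof -
    have "(\<Sum>i\<in>I. \<alpha> i * X i) \<le> (\<Sum>i\<in>I. \<alpha> i * ((n+1)*(t + 2*a*(h i*r i+(r i)^2) - 2*a*t*(h i*h i + h i*r i) + 100*a^2) - n*t))"
      using SP(1) \<alpha>0 by (intro sum_mono mult_left_mono) auto
    also have "\<dots> = (n+1)*(t* sum \<alpha> I + 2*a*(\<Sum>i\<in>I. \<alpha> i * (h i * r i)) + 2*a*(\<Sum>i\<in>I. \<alpha> i * (r i)^2)
          - 2*a*t*(\<Sum>i\<in>I. \<alpha> i * (h i * h i)) - 2*a*t*(\<Sum>i\<in>I. \<alpha> i * (h i * r i)) + 100*a^2* sum \<alpha> I) - n*t* sum \<alpha> I"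
      by (simp add: algebra_simps sum.distrib sum_subtractf sum_distrib_left sum_distrib_right)
    also have "\<dots> = (n+1)*(t + 2*a*(\<Sum>i\<in>I. \<alpha> i * (r i)^2) - 2*a*t*l0 + 100*a^2) - n*t"
      using \<alpha>1 Eh Ehr by simp
    also have "\<dots> \<le> (n+1)*(t + 2*a*(l1*t) - 2*a*t*l0 + 100*a^2) - n*t"
      using Er a0 n0 by (simp add: mult_left_mono)
    also have "\<dots> = t - 2*((n+1)*a*(l0-l1))*t + 100*((n+1)*a^2)"
      by (simp add: algebra_simps)
    also have "\<dots> \<le> t - 2*8*t + 100*(2*\<eta>^2/n)"
    proof -
      have "(n+1)*a*(l0-l1) \<ge> n*a*(l0-l1)" using a0 l01 by (simp add: mult_right_mono)
      moreover have "n*a*(l0-l1) = \<eta>*(l0-l1)" using n0 by (simp add: a_def)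
      ultimately have "(n+1)*a*(l0-l1) \<ge> 8" using gap by linarith
      hence "((n+1)*a*(l0-l1))*t \<ge> 8*t" using t0 by (simp add: mult_right_mono)
      moreover have "(n+1)*a^2 \<le> 2*\<eta>^2/n"
      proof -
        have "(n+1)*a^2 = (\<eta> + \<eta>/n)*(\<eta>/n)" using n0 by (simp add: a_def power2_eq_square field_simps)
        also have "\<dots> \<le> (2*\<eta>)*(\<eta>/n)" using n1 eta
          by (intro mult_right_mono) (auto simp: divide_le_eq)
        finally show ?thesis by (simp add: power2_eq_square)
      qed
      ultimately show ?thesis by linarith
    qed
    finally show ?thesis by simp
  qed
  have EX2: "(\<Sum>i\<in>I. \<alpha> i * (X i)^2) \<le> 774*\<eta>^2*t + 120000*\<eta>^4/n^2"
  proof -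
    have "(\<Sum>i\<in>I. \<alpha> i * (X i)^2) \<le> (\<Sum>i\<in>I. \<alpha> i * (48*\<eta>^2*(r i)^2 + 726*\<eta>^2*t + 120000*\<eta>^4/n^2))"
      using SP(2) \<alpha>0 by (intro sum_mono mult_left_mono) auto
    also have "\<dots> = 48*\<eta>^2*(\<Sum>i\<in>I. \<alpha> i * (r i)^2) + (726*\<eta>^2*t + 120000*\<eta>^4/n^2) * sum \<alpha> I"
      by (simp add: algebra_simps sum.distrib sum_distrib_left sum_distrib_right sum_divide_distrib)
    also have "\<dots> \<le> 48*\<eta>^2*t + (726*\<eta>^2*t + 120000*\<eta>^4/n^2)"
      using mult_left_mono[OF Ert, of "\<eta>^2"] \<alpha>1 by (simp add: mult.commute)
    finally show ?thesis by (simp add: mult.commute mult.left_commute)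
  qed
  have pt: "exp ((n+1) * taup (\<eta>/n) (h i) (r i) t / (300*\<eta>^2)) = exp (n*t/c) * exp (X i / c)" for i
    unfolding X_def c_def by (simp add: exp_add[symmetric] diff_divide_distrib)
  have "(\<Sum>i\<in>I. \<alpha> i * exp ((n+1) * taup (\<eta>/n) (h i) (r i) t / (300*\<eta>^2)))
      = exp (n*t/c) * (\<Sum>i\<in>I. \<alpha> i * exp (X i / c))"
    unfolding pt by (simp add: sum_distrib_left algebra_simps)
  also have "(\<Sum>i\<in>I. \<alpha> i * exp (X i / c)) \<le> (\<Sum>i\<in>I. \<alpha> i * (1 + X i / c + (X i / c)^2))"
    using SP(3) \<alpha>0 exp_le_quad by (intro sum_mono mult_left_mono) auto
  also have "\<dots> = sum \<alpha> I + (\<Sum>i\<in>I. \<alpha> i * X i)/c + (\<Sum>i\<in>I. \<alpha> i * (X i)^2)/c^2"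
    by (simp add: algebra_simps sum.distrib sum_distrib_left sum_divide_distrib power_divide)
  also have "\<dots> \<le> 1 + (-15*t + 200*\<eta>^2/n)/c + (774*\<eta>^2*t + 120000*\<eta>^4/n^2)/c^2"
  proof -
    have "(\<Sum>i\<in>I. \<alpha> i * X i)/c \<le> (-15*t + 200*\<eta>^2/n)/c" using EX c0 by (intro divide_right_mono) simp_all
    moreover have "(\<Sum>i\<in>I. \<alpha> i * (X i)^2)/c^2 \<le> (774*\<eta>^2*t + 120000*\<eta>^4/n^2)/c^2"
      using EX2 c0 by (intro divide_right_mono) simp_all
    ultimately show ?thesis using \<alpha>1 by linarith
  qed
  also have "\<dots> = 1 + t/c*(-15 + 774/300) + 2/(3*n) + 4/(3*n^2)"
    unfolding c_def using eta n0 by (simp add: field_simps power2_eq_square power4_eq_xxxx)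
  also have "\<dots> \<le> 1 + 2/n"
  proof -
    have "t/c*(-15 + 774/300) \<le> 0" using t0 c0 by (simp add: mult_nonneg_nonpos)
    moreover have "4/(3*n^2) \<le> 4/(3*n)" using n1 by (simp add: frac_le power2_eq_square)
    ultimately show ?thesis by simp
  qed
  also have "\<dots> \<le> exp (2/n)" by simp
  finally have "(\<Sum>i\<in>I. \<alpha> i * exp ((n+1) * taup (\<eta>/n) (h i) (r i) t / (300*\<eta>^2))) \<le> exp (n*t/c) * exp (2/n)"
    by (simp add: mult_left_mono)
  thus ?thesis unfolding c_def by (simp add: exp_add)
qed



lemma ip_sym: "ip d x y = ip d y x"
  unfolding ip_def by (simp add: mult.commute)

lemma ip_self_nonneg: "0 \<le> ip d x x"
  unfolding ip_def by (simp add: sum_nonneg)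

lemma ip_CS: "(ip d x y)^2 \<le> ip d x x * ip d y y"
  using Cauchy_Schwarz_ineq_sum[of x y "{..<d}"] unfolding ip_def by (simp add: power2_eq_square)

lemma vnorm_sq: "(vnorm d x)^2 = ip d x x"
  unfolding vnorm_def using ip_self_nonneg[of d x] by simp

lemma vnorm_nonneg: "0 \<le> vnorm d x"
  unfolding vnorm_def using ip_self_nonneg[of d x] by simp

lemma ip_add_left: "ip d (\<lambda>i. x i + y i) z = ip d x z + ip d y z"
  unfolding ip_def by (simp add: algebra_simps sum.distrib)
lemma ip_diff_left: "ip d (\<lambda>i. x i - y i) z = ip d x z - ip d y z"
  unfolding ip_def by (simp add: algebra_simps sum_subtractf)
lemma ip_scale_left: "ip d (\<lambda>i. c * x i) z = c * ip d x z"
  unfolding ip_def by (simp add: algebra_simps sum_distrib_left)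
lemma ip_div_left: "ip d (\<lambda>i. x i / c) z = ip d x z / c"
  unfolding ip_def by (simp add: sum_divide_distrib)
lemma ip_div_right: "ip d z (\<lambda>i. x i / c) = ip d z x / c"
  unfolding ip_def by (simp add: sum_divide_distrib)
lemma ip_add_right: "ip d z (\<lambda>i. x i + y i) = ip d z x + ip d z y"
  unfolding ip_def by (simp add: algebra_simps sum.distrib)
lemma ip_diff_right: "ip d z (\<lambda>i. x i - y i) = ip d z x - ip d z y"
  unfolding ip_def by (simp add: algebra_simps sum_subtractf)
lemma ip_scale_right: "ip d z (\<lambda>i. c * x i) = c * ip d z x"
  unfolding ip_def by (simp add: algebra_simps sum_distrib_left)

lemma abs_ip_le1:
  assumes "ip d x x = 1" "ip d y y = 1"
  shows "\<bar>ip d x y\<bar> \<le> 1"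
proof -
  have "(ip d x y)^2 \<le> 1" using ip_CS[of d x y] assms by simp
  thus ?thesis using abs_le_square_iff[of "ip d x y" 1] by simp
qed

definition tau :: "nat \<Rightarrow> (nat \<Rightarrow> real) \<Rightarrow> (nat \<Rightarrow> real) \<Rightarrow> real" where
  "tau d v p = (1 - (ip d p v)^2) / (ip d p v)^2"

lemma taup_id:
  fixes a c g h Nn :: real
  assumes c0: "0 < c" and N0: "0 < Nn" and NN: "Nn^2 = 1 + (2*a + a^2)*g^2" and cg: "0 < c + a*g*h"
  shows "(1 - ((c + a*g*h)/Nn)^2) / ((c + a*g*h)/Nn)^2 = taup a h ((g - c*h)/c) ((1 - c^2)/c^2)"
proof -
  have lhs: "(1 - ((c + a*g*h)/Nn)^2) / ((c + a*g*h)/Nn)^2 = (Nn^2 - (c + a*g*h)^2) / (c + a*g*h)^2"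
    using N0 cg by (simp add: power_divide field_simps)
  have den: "(1 + a*(h*(h + (g - c*h)/c)))^2 = (c + a*g*h)^2 / c^2"
  proof -
    have "1 + a*(h*(h + (g - c*h)/c)) = (c + a*g*h)/c" using c0 by (simp add: field_simps)
    thus ?thesis by (simp add: power_divide)
  qed
  have num: "(1 - c^2)/c^2 + 2*a*(h*((g - c*h)/c) + ((g - c*h)/c)^2) + a^2*(h + (g - c*h)/c)^2*(1-h^2)
      = (Nn^2 - (c + a*g*h)^2) / c^2"
  proof -
    have e1: "h + (g - c*h)/c = g/c" using c0 by (simp add: field_simps)
    have e2: "h*((g - c*h)/c) + ((g - c*h)/c)^2 = g*(g - c*h)/c^2"
      using c0 by (simp add: field_simps power2_eq_square)
    show ?thesis unfolding e1 e2 NN using c0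
      by (simp add: field_simps power2_eq_square)
  qed
  show ?thesis unfolding lhs taup_def num den using c0 cg by (simp add: field_simps)
qed

lemma gstep:
  fixes p q v :: "nat \<Rightarrow> real" and a :: real
  assumes pp: "ip d p p = 1" and qq: "ip d q q = 1" and a0: "0 \<le> a"
    and g0: "0 \<le> ip d p q" and h0: "0 \<le> ip d q v" and c0: "0 < ip d p v"
  defines "pt \<equiv> (\<lambda>i. p i + a * ip d p q * q i)"
  defines "p' \<equiv> (\<lambda>i. pt i / vnorm d pt)"
  shows "0 < vnorm d pt" and "(vnorm d pt)^2 = 1 + (2*a + a^2)*(ip d p q)^2"
    and "\<And>y. ip d p' y = (ip d p y + a * ip d p q * ip d q y) / vnorm d pt"
    and "ip d p' p' = 1" and "0 < ip d p' v"
    and "tau d v p' = taup a (ip d q v) ((ip d p q - ip d p v * ip d q v)/ip d p v) (tau d v p)"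
proof -
  define g where "g = ip d p q"
  define h where "h = ip d q v"
  define c where "c = ip d p v"
  have ipt: "ip d pt y = ip d p y + a * g * ip d q y" for y
    unfolding pt_def g_def by (simp add: ip_add_left ip_scale_left)
  have ptpt: "ip d pt pt = 1 + (2*a + a^2)*g^2"
  proof -
    have "ip d pt pt = ip d p pt + a * g * ip d q pt" by (rule ipt)
    also have "ip d p pt = 1 + a*g*g" using ipt[of p] pp by (simp add: ip_sym g_def)
    also have "ip d q pt = g + a*g" using ipt[of q] qq by (simp add: ip_sym g_def)
    finally show ?thesis by (simp add: power2_eq_square algebra_simps)
  qed
  have ge1: "1 \<le> ip d pt pt" unfolding ptpt using a0 by simp
  show NN: "(vnorm d pt)^2 = 1 + (2*a + a^2)*(ip d p q)^2" using vnorm_sq[of d pt] ptpt g_def by simp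
  show N0: "0 < vnorm d pt" unfolding vnorm_def using ge1 by simp
  show ipp: "ip d p' y = (ip d p y + a * ip d p q * ip d q y) / vnorm d pt" for y
    unfolding p'_def ip_div_left ipt g_def by simp
  show "ip d p' p' = 1"
  proof -
    have "ip d p' p' = ip d pt p' / vnorm d pt" unfolding p'_def ip_div_left by simp
    also have "ip d pt p' = ip d pt pt / vnorm d pt" unfolding p'_def by (rule ip_div_right)
    finally show ?thesis using N0 ge1 vnorm_sq[of d pt] by (simp add: power2_eq_square)
  qed
  have cv: "ip d p' v = (c + a*g*h) / vnorm d pt" using ipp[of v] unfolding c_def g_def h_def by simp
  have cg: "0 < c + a*g*h" using c0 a0 g0 h0 unfolding c_def g_def h_def by (simp add: add_pos_nonneg)
  show "0 < ip d p' v" using cv cg N0 by simp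
  have "tau d v p' = (1 - ((c + a*g*h)/vnorm d pt)^2) / ((c + a*g*h)/vnorm d pt)^2"
    unfolding tau_def cv ..
  also have "\<dots> = taup a h ((g - c*h)/c) ((1 - c^2)/c^2)"
    by (rule taup_id) (use c0 N0 NN cg in \<open>auto simp: c_def g_def\<close>)
  finally show "tau d v p' = taup a (ip d q v) ((ip d p q - ip d p v * ip d q v)/ip d p v) (tau d v p)"
    unfolding tau_def c_def g_def h_def .
qed

lemma rho_bound:
  assumes pp: "ip d p p = 1" and qq: "ip d q q = 1" and vv: "ip d v v = 1"
  shows "(ip d p q - ip d p v * ip d q v)^2 \<le> (1 - (ip d q v)^2) * (1 - (ip d p v)^2)"
proof -
  define x where "x = (\<lambda>i. q i - ip d q v * v i)"
  define z where "z = (\<lambda>i. p i - ip d p v * v i)"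
  have xz: "ip d x z = ip d p q - ip d p v * ip d q v"
    unfolding x_def z_def ip_diff_left ip_diff_right ip_scale_left ip_scale_right
    using vv by (simp add: ip_sym algebra_simps)
  have xx: "ip d x x = 1 - (ip d q v)^2"
    unfolding x_def ip_diff_left ip_diff_right ip_scale_left ip_scale_right
    using vv qq by (simp add: ip_sym algebra_simps power2_eq_square)
  have zz: "ip d z z = 1 - (ip d p v)^2"
    unfolding z_def ip_diff_left ip_diff_right ip_scale_left ip_scale_right
    using vv pp by (simp add: ip_sym algebra_simps power2_eq_square)
  show ?thesis using ip_CS[of d x z] xz xx zz by simp
qed



lemma orth_complete:
  fixes U :: "nat \<Rightarrow> nat \<Rightarrow> real"
  assumes on: "\<And>k l. k < d \<Longrightarrow> l < d \<Longrightarrow> ip d (U k) (U l) = (if k = l then 1 else 0)"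
  assumes i: "i < d" and j: "j < d"
  shows "(\<Sum>k<d. U k i * U k j) = (if i = j then 1 else 0)"
proof -
  define M where "M = mat d d (\<lambda>(k,i). U k i)"
  have Mc: "M \<in> carrier_mat d d" unfolding M_def by simp
  have MT: "transpose_mat M \<in> carrier_mat d d" unfolding M_def by simp
  have "M * transpose_mat M = 1\<^sub>m d"
  proof (rule eq_matI)
    fix k l assume k: "k < dim_row (1\<^sub>m d)" and l: "l < dim_col (1\<^sub>m d)"
    hence kd: "k < d" and ld: "l < d" by auto
    have "(M * transpose_mat M) $$ (k, l) = (\<Sum>i<d. U k i * U l i)"
      using kd ld unfolding M_def
      by (simp add: scalar_prod_def row_def col_def lessThan_atLeast0)
    also have "\<dots> = (if k = l then 1 else 0)" using on[OF kd ld] by (simp add: ip_def)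
    finally show "(M * transpose_mat M) $$ (k, l) = 1\<^sub>m d $$ (k, l)" using kd ld by simp
  qed (auto simp: M_def)
  hence "transpose_mat M * M = 1\<^sub>m d" using mat_mult_left_right_inverse[OF Mc MT] by simp
  hence "(transpose_mat M * M) $$ (i, j) = 1\<^sub>m d $$ (i, j)" by simp
  moreover have "(transpose_mat M * M) $$ (i, j) = (\<Sum>k<d. U k i * U k j)"
    using i j unfolding M_def
    by (simp add: scalar_prod_def row_def col_def lessThan_atLeast0)
  ultimately show ?thesis using i j by simp
qed

lemma parseval:
  fixes U :: "nat \<Rightarrow> nat \<Rightarrow> real"
  assumes on: "\<And>k l. k < d \<Longrightarrow> l < d \<Longrightarrow> ip d (U k) (U l) = (if k = l then 1 else 0)"
  shows "ip d x y = (\<Sum>k<d. ip d (U k) x * ip d (U k) y)"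
proof -
  have "(\<Sum>k<d. ip d (U k) x * ip d (U k) y) = (\<Sum>k<d. \<Sum>i<d. \<Sum>j<d. x i * y j * (U k i * U k j))"
  proof (rule sum.cong[OF refl])
    fix k
    have "ip d (U k) x * ip d (U k) y = (\<Sum>i<d. \<Sum>j<d. (U k i * x i) * (U k j * y j))"
      unfolding ip_def by (rule sum_product)
    also have "\<dots> = (\<Sum>i<d. \<Sum>j<d. x i * y j * (U k i * U k j))"
      by (intro sum.cong refl) (simp add: mult_ac)
    finally show "ip d (U k) x * ip d (U k) y = (\<Sum>i<d. \<Sum>j<d. x i * y j * (U k i * U k j))" .
  qed
  also have "\<dots> = (\<Sum>i<d. \<Sum>k<d. \<Sum>j<d. x i * y j * (U k i * U k j))"
    by (rule sum.swap)
  also have "\<dots> = (\<Sum>i<d. \<Sum>j<d. \<Sum>k<d. x i * y j * (U k i * U k j))"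
    by (intro sum.cong refl sum.swap)
  also have "\<dots> = (\<Sum>i<d. \<Sum>j<d. x i * y j * (\<Sum>k<d. U k i * U k j))"
    by (simp add: sum_distrib_left)
  also have "\<dots> = (\<Sum>i<d. \<Sum>j<d. x i * y j * (if i = j then 1 else 0))"
    using orth_complete[OF on] by (intro sum.cong refl) auto
  also have "\<dots> = (\<Sum>i<d. x i * y i)"
    by (intro sum.cong refl) (simp add: if_distrib cong: if_cong)
  finally show ?thesis by (simp add: ip_def)
qed

lemma quad_form:
  fixes U :: "nat \<Rightarrow> nat \<Rightarrow> real" and A :: "nat \<Rightarrow> nat \<Rightarrow> real"
  assumes on: "\<And>k l. k < d \<Longrightarrow> l < d \<Longrightarrow> ip d (U k) (U l) = (if k = l then 1 else 0)"
    and eig: "\<And>k. k < d \<Longrightarrow> mulv d A (U k) = (\<lambda>i. lam k * U k i)"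
    and sym: "\<And>i j. A i j = A j i"
  shows "ip d z (mulv d A w) = (\<Sum>k<d. lam k * ip d (U k) z * ip d (U k) w)"
proof -
  have key: "ip d (U k) (mulv d A w) = lam k * ip d (U k) w" if k: "k < d" for k
  proof -
    have "ip d (U k) (mulv d A w) = (\<Sum>i<d. U k i * (\<Sum>j<d. A i j * w j))"
      unfolding ip_def mulv_def by simp
    also have "\<dots> = (\<Sum>i<d. \<Sum>j<d. w j * (A j i * U k i))"
      by (simp add: sum_distrib_left sym mult_ac)
    also have "\<dots> = (\<Sum>j<d. \<Sum>i<d. w j * (A j i * U k i))"
      by (rule sum.swap)
    also have "\<dots> = (\<Sum>j<d. w j * (\<Sum>i<d. A j i * U k i))"
      by (simp add: sum_distrib_left)
    also have "\<dots> = (\<Sum>j<d. w j * mulv d A (U k) j)"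
      unfolding mulv_def by simp
    also have "\<dots> = (\<Sum>j<d. w j * (lam k * U k j))" using eig[OF k] by simp
    also have "\<dots> = lam k * ip d (U k) w" unfolding ip_def by (simp add: sum_distrib_left mult_ac)
    finally show ?thesis .
  qed
  have "ip d z (mulv d A w) = (\<Sum>k<d. ip d (U k) z * ip d (U k) (mulv d A w))"
    by (rule parseval[OF on])
  also have "\<dots> = (\<Sum>k<d. lam k * ip d (U k) z * ip d (U k) w)"
    using key by (intro sum.cong refl) simp
  finally show ?thesis .
qed

lemma spectral_bounds:
  fixes A :: "nat \<Rightarrow> nat \<Rightarrow> real"
  assumes se: "sorted_eigenvalues d A lam" and sym: "\<And>i j. A i j = A j i"
    and d2: "2 \<le> d" and v1: "ip d v v = 1" and ev: "mulv d A v = (\<lambda>i. lam 0 * v i)"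
    and gap: "lam 1 < lam 0"
  shows "ip d z (mulv d A z) \<le> lam 0 * ip d z z"
    and "ip d z v = 0 \<Longrightarrow> ip d z (mulv d A z) \<le> lam 1 * ip d z z"
proof -
  have ex: "\<exists>U :: nat \<Rightarrow> nat \<Rightarrow> real.
        (\<forall>k<d. U k \<in> vecs d \<and> mulv d A (U k) = (\<lambda>i. lam k * U k i)) \<and>
        (\<forall>k<d. \<forall>l<d. ip d (U k) (U l) = (if k = l then 1 else 0))"
    and srt0: "\<forall>k l. k \<le> l \<and> l < d \<longrightarrow> lam l \<le> lam k"
    using se unfolding sorted_eigenvalues_def by simp_all
  then obtain U where U1: "\<forall>k<d. U k \<in> vecs d \<and> mulv d A (U k) = (\<lambda>i. lam k * U k i)"
    and U2: "\<forall>k<d. \<forall>l<d. ip d (U k) (U l) = (if k = l then 1 else 0)" by blast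
  have srt: "\<And>k l. k \<le> l \<Longrightarrow> l < d \<Longrightarrow> lam l \<le> lam k" using srt0 by simp
  have on: "\<And>k l. k < d \<Longrightarrow> l < d \<Longrightarrow> ip d (U k) (U l) = (if k = l then 1 else 0)"
    using U2 by simp
  have eig: "\<And>k. k < d \<Longrightarrow> mulv d A (U k) = (\<lambda>i. lam k * U k i)" using U1 by simp
  have QF: "ip d z (mulv d A z) = (\<Sum>k<d. lam k * (ip d (U k) z)^2)"
    using quad_form[OF on eig sym, of z z] by (simp add: power2_eq_square mult.assoc)
  have PZ: "ip d z z = (\<Sum>k<d. (ip d (U k) z)^2)"
    using parseval[OF on, of z z] by (simp add: power2_eq_square)
  show "ip d z (mulv d A z) \<le> lam 0 * ip d z z"
  proof -
    have "(\<Sum>k<d. lam k * (ip d (U k) z)^2) \<le> (\<Sum>k<d. lam 0 * (ip d (U k) z)^2)"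
      using srt by (intro sum_mono mult_right_mono) auto
    thus ?thesis using QF PZ by (simp add: sum_distrib_left)
  qed
  have vk: "ip d (U k) v = 0" if k: "k < d" "1 \<le> k" for k
  proof -
    have "ip d (U k) (mulv d A v) = lam k * ip d (U k) v"
    proof -
      have "ip d (U k) (mulv d A v) = (\<Sum>j<d. lam j * ip d (U j) (U k) * ip d (U j) v)"
        by (rule quad_form[OF on eig sym])
      also have "\<dots> = (\<Sum>j<d. if j = k then lam k * ip d (U k) v else 0)"
        using on k by (intro sum.cong refl) auto
      also have "\<dots> = lam k * ip d (U k) v" using k by simp
      finally show ?thesis .
    qed
    moreover have "ip d (U k) (mulv d A v) = lam 0 * ip d (U k) v"
      unfolding ev ip_def by (simp add: sum_distrib_left algebra_simps)
    moreover have "lam k \<le> lam 1" using srt k by auto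
    ultimately have "(lam 0 - lam k) * ip d (U k) v = 0" "lam 0 - lam k \<noteq> 0" using gap
      by (simp_all add: left_diff_distrib)
    thus ?thesis by simp
  qed
  assume zv: "ip d z v = 0"
  have "ip d z v = (\<Sum>k<d. ip d (U k) z * ip d (U k) v)" by (rule parseval[OF on])
  also have "\<dots> = (\<Sum>k\<in>{0}. ip d (U k) z * ip d (U k) v)"
    using vk d2 by (intro sum.mono_neutral_right) auto
  finally have z0v0: "ip d (U 0) z * ip d (U 0) v = 0" using zv by simp
  have "1 = ip d v v" using v1 by simp
  also have "\<dots> = (\<Sum>k<d. (ip d (U k) v)^2)" using parseval[OF on, of v v] by (simp add: power2_eq_square)
  also have "\<dots> = (\<Sum>k\<in>{0}. (ip d (U k) v)^2)"
    using vk d2 by (intro sum.mono_neutral_right) auto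
  finally have "ip d (U 0) v \<noteq> 0" by auto
  hence z0: "ip d (U 0) z = 0" using z0v0 by simp
  have "(\<Sum>k<d. lam k * (ip d (U k) z)^2) \<le> (\<Sum>k<d. lam 1 * (ip d (U k) z)^2)"
  proof (intro sum_mono)
    fix k assume "k \<in> {..<d}"
    show "lam k * (ip d (U k) z)^2 \<le> lam 1 * (ip d (U k) z)^2"
    proof (cases "k = 0")
      case True thus ?thesis using z0 by simp
    next
      case False thus ?thesis using srt \<open>k \<in> {..<d}\<close> by (intro mult_right_mono) auto
    qed
  qed
  thus "ip d z (mulv d A z) \<le> lam 1 * ip d z z" using QF PZ by (simp add: sum_distrib_left)
qed



definition Cyl :: "nat pmf \<Rightarrow> nat \<Rightarrow> (nat \<Rightarrow> nat) \<Rightarrow> (nat \<Rightarrow> nat) set" where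
  "Cyl D T w = prod_emb UNIV (\<lambda>_. measure_pmf D) {..<T} (PiE {..<T} (\<lambda>t. {w t}))"

lemma Cyl_iff: "\<omega> \<in> Cyl D T w \<longleftrightarrow> (\<forall>t<T. \<omega> t = w t)"
  unfolding Cyl_def prod_emb_iff by (auto simp: PiE_iff)

lemma Cyl_sets: "Cyl D T w \<in> sets (PiM UNIV (\<lambda>_. measure_pmf D))"
  unfolding Cyl_def by (rule sets_PiM_I) auto

lemma Cyl_measure: "measure (PiM UNIV (\<lambda>_. measure_pmf D)) (Cyl D T w) = (\<Prod>t<T. pmf D (w t))"
proof -
  have "emeasure (PiM UNIV (\<lambda>_. measure_pmf D)) (Cyl D T w) = (\<Prod>t<T. emeasure (measure_pmf D) {w t})"
    unfolding Cyl_def by (rule emeasure_PiM_emb) (auto simp: prob_space_measure_pmf)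
  also have "\<dots> = (\<Prod>t<T. ennreal (pmf D (w t)))" by (simp add: emeasure_pmf_single)
  also have "\<dots> = ennreal (\<Prod>t<T. pmf D (w t))" by (simp add: prod_ennreal)
  finally show ?thesis by (simp add: measure_def prod_nonneg)
qed

lemma prob_lower:
  fixes D :: "nat pmf" and F :: "(nat \<Rightarrow> nat) \<Rightarrow> real" and R :: real and G :: "(nat \<Rightarrow> nat) set"
  assumes dep: "\<And>\<omega> \<omega>'. (\<forall>t<T. \<omega> t = \<omega>' t) \<Longrightarrow> F \<omega> = F \<omega>'"
    and finG: "finite G" and GP: "G \<subseteq> PiE {..<T} (\<lambda>_. UNIV)"
    and good: "\<And>w. w \<in> G \<Longrightarrow> F w \<le> R"
  shows "measure (PiM UNIV (\<lambda>_. measure_pmf D)) {\<omega> \<in> space (PiM UNIV (\<lambda>_. measure_pmf D)). F \<omega> \<le> R}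
          \<ge> (\<Sum>w\<in>G. \<Prod>t<T. pmf D (w t))"
proof -
  let ?M = "PiM UNIV (\<lambda>_::nat. measure_pmf D)"
  interpret P: prob_space ?M by (rule prob_space_PiM) (simp add: prob_space_measure_pmf)
  define E where "E = {\<omega> \<in> space ?M. F \<omega> \<le> R}"
  have sp: "space ?M = UNIV" by (simp add: space_PiM)
  have Eeq: "E = (\<Union>w\<in>{w \<in> PiE {..<T} (\<lambda>_. UNIV). F w \<le> R}. Cyl D T w)"
  proof (intro equalityI subsetI)
    fix \<omega> assume "\<omega> \<in> E"
    hence F\<omega>: "F \<omega> \<le> R" unfolding E_def by simp
    let ?w = "restrict \<omega> {..<T}"
    have "F ?w = F \<omega>" by (rule dep) simp
    hence "?w \<in> {w \<in> PiE {..<T} (\<lambda>_. UNIV). F w \<le> R}" using F\<omega> by simp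
    moreover have "\<omega> \<in> Cyl D T ?w" unfolding Cyl_iff by simp
    ultimately show "\<omega> \<in> (\<Union>w\<in>{w \<in> PiE {..<T} (\<lambda>_. UNIV). F w \<le> R}. Cyl D T w)" by blast
  next
    fix \<omega> assume "\<omega> \<in> (\<Union>w\<in>{w \<in> PiE {..<T} (\<lambda>_. UNIV). F w \<le> R}. Cyl D T w)"
    then obtain w where w: "F w \<le> R" "\<omega> \<in> Cyl D T w" by blast
    have "F \<omega> = F w" using w(2) unfolding Cyl_iff by (intro dep) simp
    thus "\<omega> \<in> E" using w(1) sp unfolding E_def by simp
  qed
  have Esets: "E \<in> sets ?M"
    unfolding Eeq
  proof (rule sets.countable_UN')
    have "countable (PiE {..<T} (\<lambda>_::nat. UNIV :: nat set))" by (rule countable_PiE) auto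
    thus "countable {w \<in> PiE {..<T} (\<lambda>_. UNIV). F w \<le> R}" by (rule countable_subset[rotated]) auto
    show "Cyl D T ` {w \<in> PiE {..<T} (\<lambda>_. UNIV). F w \<le> R} \<subseteq> sets ?M" using Cyl_sets by auto
  qed
  have sub: "(\<Union>w\<in>G. Cyl D T w) \<subseteq> E"
    unfolding Eeq using GP good by blast
  have disj: "disjoint_family_on (Cyl D T) G"
  proof (unfold disjoint_family_on_def, intro ballI impI)
    fix w w' assume w: "w \<in> G" and w': "w' \<in> G" and ne: "w \<noteq> w'"
    have "\<exists>t<T. w t \<noteq> w' t"
    proof (rule ccontr)
      assume "\<not> (\<exists>t<T. w t \<noteq> w' t)"
      hence "w = w'" using GP w w' by (intro PiE_ext[of w "{..<T}" "\<lambda>_. UNIV" w']) auto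
      thus False using ne by simp
    qed
    then obtain t where "t < T" "w t \<noteq> w' t" by blast
    thus "Cyl D T w \<inter> Cyl D T w' = {}" by (auto simp: Cyl_iff)
  qed
  have "(\<Sum>w\<in>G. \<Prod>t<T. pmf D (w t)) = (\<Sum>w\<in>G. measure ?M (Cyl D T w))"
    by (simp add: Cyl_measure)
  also have "\<dots> = measure ?M (\<Union>w\<in>G. Cyl D T w)"
    by (rule measure_finite_Union[symmetric]) (use finG Cyl_sets disj in auto)
  also have "\<dots> \<le> measure ?M E"
    by (rule P.finite_measure_mono[OF sub Esets])
  finally show ?thesis unfolding E_def .
qed



lemma covq: "ip d x (mulv d (covm N \<alpha> q) y) = (\<Sum>k<N. \<alpha> k * ip d (q k) x * ip d (q k) y)"
proof -
  have "ip d x (mulv d (covm N \<alpha> q) y) = (\<Sum>i<d. \<Sum>j<d. \<Sum>k<N. x i * (\<alpha> k * q k i * q k j * y j))"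
    unfolding ip_def mulv_def covm_def by (simp add: sum_distrib_left sum_distrib_right)
  also have "\<dots> = (\<Sum>k<N. \<Sum>i<d. \<Sum>j<d. x i * (\<alpha> k * q k i * q k j * y j))"
    by (simp add: sum.swap[of _ "{..<N}"])
  also have "\<dots> = (\<Sum>k<N. \<alpha> k * ip d (q k) x * ip d (q k) y)"
    unfolding ip_def
    by (intro sum.cong refl) (simp add: sum_product sum_distrib_left mult_ac)
  finally show ?thesis .
qed

lemma covm_sym: "covm N \<alpha> q i j = covm N \<alpha> q j i"
  unfolding covm_def by (simp add: mult_ac)

lemma pref_cong: "(\<And>k. k < t \<Longrightarrow> w k = w' k) \<Longrightarrow> pref d q p0 \<eta> s w t = pref d q p0 \<eta> s w' t"
  by (induction t) (auto simp: Let_def)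

lemma pref_Suc: "pref d q p0 \<eta> s w (Suc t) =
   (\<lambda>i. (pref d q p0 \<eta> s w t i + (real \<eta> / (real t + real s)) * ip d (pref d q p0 \<eta> s w t) (q (w t)) * q (w t) i)
      / vnorm d (\<lambda>i. pref d q p0 \<eta> s w t i + (real \<eta> / (real t + real s)) * ip d (pref d q p0 \<eta> s w t) (q (w t)) * q (w t) i))"
  by (simp add: Let_def)

lemma sphere_ip: "x \<in> sphere_d d \<Longrightarrow> ip d x x = 1"
  unfolding sphere_d_def vnorm_def using ip_self_nonneg[of d x] by auto

locale oja =
  fixes d N :: nat and q :: "nat \<Rightarrow> nat \<Rightarrow> real" and \<alpha> :: "nat \<Rightarrow> real"
    and lam :: "nat \<Rightarrow> real" and v1 p0 :: "nat \<Rightarrow> real" and \<eta> s :: nat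
  assumes d2: "2 \<le> d" and qs: "\<forall>i<N. q i \<in> sphere_d d"
    and \<alpha>0: "\<forall>i<N. 0 \<le> \<alpha> i" and \<alpha>1: "(\<Sum>i<N. \<alpha> i) = 1"
    and p0s: "p0 \<in> sphere_d d" and se: "sorted_eigenvalues d (covm N \<alpha> q) lam"
    and v1s: "v1 \<in> sphere_d d" and ev: "mulv d (covm N \<alpha> q) v1 = (\<lambda>i. lam 0 * v1 i)"
    and eta1: "1 \<le> \<eta>" and s1: "1 \<le> s" and c0: "sqrt 2 / 2 \<le> ip d v1 p0"
    and gap: "lam 1 < lam 0" and etagap: "8 / (lam 0 - lam 1) \<le> real \<eta>"
    and sA: "self_aligned d q {i. i < N \<and> 0 < \<alpha> i} v1"
    and sB: "self_aligned d q {i. i < N \<and> 0 < \<alpha> i} p0"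
    and small: "real \<eta> / real s \<le> 1/1000"
begin

definition Sp :: "nat set" where "Sp = {i. i < N \<and> 0 < \<alpha> i}"

abbreviation P where "P w t \<equiv> pref d q p0 \<eta> s w t"

lemma fin_Sp: "finite Sp" unfolding Sp_def by simp

lemma sum_Sp: "(\<Sum>k<N. \<alpha> k * f k) = (\<Sum>k\<in>Sp. \<alpha> k * f k)"
proof -
  have "(\<Sum>k\<in>Sp. \<alpha> k * f k) = (\<Sum>k<N. \<alpha> k * f k)"
    by (rule sum.mono_neutral_left) (use \<alpha>0 in \<open>auto simp: Sp_def less_le\<close>)
  thus ?thesis by simp
qed

lemma sumSp1: "sum \<alpha> Sp = 1"
  using sum_Sp[of "\<lambda>_. 1"] \<alpha>1 by simp

lemma vv: "ip d v1 v1 = 1" using sphere_ip[OF v1s] .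
lemma qq: "i \<in> Sp \<Longrightarrow> ip d (q i) (q i) = 1" using sphere_ip qs by (auto simp: Sp_def)
lemma hnn: "i \<in> Sp \<Longrightarrow> 0 \<le> ip d (q i) v1" using sA by (auto simp: self_aligned_def Sp_def)
lemma qqnn: "i \<in> Sp \<Longrightarrow> j \<in> Sp \<Longrightarrow> 0 \<le> ip d (q i) (q j)" using sA by (auto simp: self_aligned_def Sp_def)
lemma p0q: "i \<in> Sp \<Longrightarrow> 0 \<le> ip d p0 (q i)" using sB by (auto simp: self_aligned_def Sp_def ip_sym)

lemma sqrt2: "sqrt 2 / 2 > (0::real)" by simp

lemma invariant:
  assumes "\<And>k. k < t \<Longrightarrow> w k \<in> Sp"
  shows "ip d (P w t) (P w t) = 1 \<and> 0 < ip d (P w t) v1 \<and> (\<forall>i\<in>Sp. 0 \<le> ip d (P w t) (q i))"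
  using assms
proof (induction t)
  case 0
  have "0 < ip d v1 p0" using c0 sqrt2 by linarith
  hence "0 < ip d p0 v1" by (simp add: ip_sym)
  thus ?case using sphere_ip[OF p0s] p0q by simp
next
  case (Suc t)
  hence IH: "ip d (P w t) (P w t) = 1" "0 < ip d (P w t) v1" "\<forall>i\<in>Sp. 0 \<le> ip d (P w t) (q i)"
    by auto
  have wt: "w t \<in> Sp" using Suc.prems by simp
  define a where "a = real \<eta> / (real t + real s)"
  have a0: "0 \<le> a" unfolding a_def by simp
  note G = gstep[OF IH(1) qq[OF wt] a0 IH(3)[rule_format, OF wt] hnn[OF wt] IH(2)]
  have eqP: "P w (Suc t) = (\<lambda>i. (P w t i + a * ip d (P w t) (q (w t)) * q (w t) i)
      / vnorm d (\<lambda>i. P w t i + a * ip d (P w t) (q (w t)) * q (w t) i))"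
    unfolding pref_Suc a_def ..
  have "\<forall>i\<in>Sp. 0 \<le> ip d (P w (Suc t)) (q i)"
  proof
    fix i assume i: "i \<in> Sp"
    have "0 \<le> (ip d (P w t) (q i) + a * ip d (P w t) (q (w t)) * ip d (q (w t)) (q i))"
      using IH(3) i wt a0 qqnn[OF wt i] by (simp add: add_nonneg_nonneg)
    thus "0 \<le> ip d (P w (Suc t)) (q i)" unfolding eqP G(3) using G(1) by simp
  qed
  thus ?case unfolding eqP using G(4,5) by simp
qed

lemma step_mgf:
  assumes w: "\<And>k. k < t \<Longrightarrow> w k \<in> Sp" and tb: "tau d v1 (P w t) \<le> 2"
  shows "(\<Sum>i\<in>Sp. \<alpha> i * exp ((real t + real s + 1) * tau d v1 (P (w(t:=i)) (Suc t)) / (300 * (real \<eta>)^2)))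
       \<le> exp ((real t + real s) * tau d v1 (P w t) / (300*(real \<eta>)^2) + 2/(real t + real s))"
proof -
  define p where "p = P w t"
  define c where "c = ip d p v1"
  define a where "a = real \<eta> / (real t + real s)"
  define h where "h i = ip d (q i) v1" for i
  define g where "g i = ip d p (q i)" for i
  define r where "r i = (g i - c * h i) / c" for i
  define \<tau> where "\<tau> = tau d v1 p"
  have inv: "ip d p p = 1" "0 < c" "\<forall>i\<in>Sp. 0 \<le> g i"
    using invariant[OF w] unfolding p_def c_def g_def by auto
  have a0: "0 \<le> a" unfolding a_def by simp
  have c1: "c \<le> 1" using abs_ip_le1[OF inv(1) vv] unfolding c_def by simp
  have tau_eq: "\<tau> = (1 - c^2)/c^2" unfolding \<tau>_def tau_def c_def ..
  have tau0: "0 \<le> \<tau>" unfolding tau_eq using inv(2) c1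
    by (simp add: power_le_one)
  have Pi: "tau d v1 (P (w(t:=i)) (Suc t)) = taup a (h i) (r i) \<tau>" if i: "i \<in> Sp" for i
  proof -
    have pc: "P (w(t:=i)) t = p" unfolding p_def by (rule pref_cong) simp
    have eqP: "P (w(t:=i)) (Suc t) = (\<lambda>j. (p j + a * ip d p (q i) * q i j)
      / vnorm d (\<lambda>j. p j + a * ip d p (q i) * q i j))"
      unfolding pref_Suc pc a_def by simp
    have gi: "0 \<le> ip d p (q i)" using inv(3) i unfolding g_def by simp
    show ?thesis unfolding eqP
      using gstep(6)[OF inv(1) qq[OF i] a0 gi hnn[OF i]] inv(2)
      unfolding c_def h_def r_def g_def \<tau>_def by simp
  qed
  have hb: "0 \<le> h i \<and> h i \<le> 1 \<and> (r i)^2 \<le> (1 - (h i)^2)*\<tau> \<and> 0 \<le> h i + r i" if i: "i \<in> Sp" for i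
  proof (intro conjI)
    show "0 \<le> h i" using hnn[OF i] unfolding h_def .
    show "h i \<le> 1" using abs_ip_le1[OF qq[OF i] vv] unfolding h_def by simp
    have "(g i - c * h i)^2 \<le> (1 - (h i)^2) * (1 - c^2)"
      using rho_bound[OF inv(1) qq[OF i] vv] unfolding g_def c_def h_def .
    hence "(g i - c * h i)^2 / c^2 \<le> (1 - (h i)^2) * (1 - c^2) / c^2"
      by (intro divide_right_mono) simp_all
    thus "(r i)^2 \<le> (1 - (h i)^2)*\<tau>" unfolding r_def tau_eq by (simp add: power_divide)
    have "h i + r i = g i / c" unfolding r_def using inv(2) by (simp add: field_simps)
    thus "0 \<le> h i + r i" using inv(2,3) i by simp
  qed
  have Eh: "(\<Sum>i\<in>Sp. \<alpha> i * (h i * h i)) = lam 0"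
  proof -
    have "ip d v1 (mulv d (covm N \<alpha> q) v1) = (\<Sum>k<N. \<alpha> k * ip d (q k) v1 * ip d (q k) v1)" by (rule covq)
    also have "\<dots> = (\<Sum>k\<in>Sp. \<alpha> k * (h k * h k))" using sum_Sp[of "\<lambda>k. h k * h k"] unfolding h_def by (simp add: mult.assoc)
    finally have "(\<Sum>k\<in>Sp. \<alpha> k * (h k * h k)) = ip d v1 (mulv d (covm N \<alpha> q) v1)" by simp
    also have "\<dots> = lam 0" unfolding ev ip_scale_right vv by simp
    finally show ?thesis .
  qed
  have Ehg: "(\<Sum>i\<in>Sp. \<alpha> i * (h i * g i)) = lam 0 * c"
  proof -
    have "ip d p (mulv d (covm N \<alpha> q) v1) = (\<Sum>k<N. \<alpha> k * ip d (q k) p * ip d (q k) v1)" by (rule covq)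
    also have "\<dots> = (\<Sum>k\<in>Sp. \<alpha> k * (h k * g k))" using sum_Sp[of "\<lambda>k. h k * g k"] unfolding h_def g_def
      by (simp add: mult_ac ip_sym)
    finally have "(\<Sum>k\<in>Sp. \<alpha> k * (h k * g k)) = ip d p (mulv d (covm N \<alpha> q) v1)" by simp
    also have "\<dots> = lam 0 * c" unfolding ev ip_scale_right c_def by simp
    finally show ?thesis .
  qed
  have Ehr: "(\<Sum>i\<in>Sp. \<alpha> i * (h i * r i)) = 0"
  proof -
    have "(\<Sum>i\<in>Sp. \<alpha> i * (h i * r i)) = ((\<Sum>i\<in>Sp. \<alpha> i * (h i * g i)) - c * (\<Sum>i\<in>Sp. \<alpha> i * (h i * h i))) / c"
      unfolding r_def using inv(2)
      by (simp add: sum_divide_distrib sum_subtractf sum_distrib_left algebra_simps diff_divide_distrib)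
    also have "\<dots> = 0" unfolding Ehg Eh by simp
    finally show ?thesis .
  qed
  have Er: "(\<Sum>i\<in>Sp. \<alpha> i * (r i)^2) \<le> lam 1 * \<tau>"
  proof -
    define z where "z = (\<lambda>i. p i - c * v1 i)"
    have zq: "ip d (q k) z = g k - c * h k" for k
      unfolding z_def ip_diff_right ip_scale_right g_def h_def by (simp add: ip_sym)
    have zv: "ip d z v1 = 0" unfolding z_def ip_diff_left ip_scale_left vv c_def by simp
    have zz: "ip d z z = 1 - c^2"
      unfolding z_def ip_diff_left ip_diff_right ip_scale_left ip_scale_right
      using vv inv(1) unfolding c_def by (simp add: ip_sym power2_eq_square algebra_simps)
    have "ip d z (mulv d (covm N \<alpha> q) z) = (\<Sum>k<N. \<alpha> k * ip d (q k) z * ip d (q k) z)" by (rule covq)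
    also have "\<dots> = (\<Sum>k\<in>Sp. \<alpha> k * (g k - c * h k)^2)"
      using sum_Sp[of "\<lambda>k. (g k - c * h k)^2"] unfolding zq by (simp add: power2_eq_square mult.assoc)
    finally have e1: "(\<Sum>k\<in>Sp. \<alpha> k * (g k - c * h k)^2) = ip d z (mulv d (covm N \<alpha> q) z)" by simp
    have "ip d z (mulv d (covm N \<alpha> q) z) \<le> lam 1 * ip d z z"
      by (rule spectral_bounds(2)[OF se covm_sym d2 vv ev gap zv])
    hence e2: "(\<Sum>k\<in>Sp. \<alpha> k * (g k - c * h k)^2) \<le> lam 1 * (1 - c^2)" using e1 zz by simp
    have "(\<Sum>i\<in>Sp. \<alpha> i * (r i)^2) = (\<Sum>k\<in>Sp. \<alpha> k * (g k - c * h k)^2) / c^2"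
      unfolding r_def by (simp add: sum_divide_distrib power_divide)
    also have "\<dots> \<le> lam 1 * (1 - c^2) / c^2" using e2 by (intro divide_right_mono) simp_all
    finally show ?thesis unfolding tau_eq by simp
  qed
  have gapp: "0 < lam 0 - lam 1" using gap by simp
  have G8: "8 \<le> real \<eta> * (lam 0 - lam 1)" using etagap gapp by (simp add: divide_le_eq)
  have n1: "1 \<le> real t + real s" using s1 by simp
  have an: "real \<eta> / (real t + real s) \<le> 1/1000"
  proof -
    have "real \<eta> / (real t + real s) \<le> real \<eta> / real s" using s1 by (intro divide_left_mono) auto
    thus ?thesis using small by linarith
  qed
  have tau2: "\<tau> \<le> 2" using tb unfolding \<tau>_def p_def .
  have M: "(\<Sum>i\<in>Sp. \<alpha> i * exp ((real t + real s + 1) * taup (real \<eta> / (real t + real s)) (h i) (r i) \<tau> / (300*(real \<eta>)^2)))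
          \<le> exp ((real t + real s) * \<tau> / (300*(real \<eta>)^2) + 2/(real t + real s))"
    by (rule mgf_step[OF fin_Sp _ sumSp1 hb tau0 tau2 Eh Ehr Er _ G8 n1 an])
       (use \<alpha>0 eta1 in \<open>auto simp: Sp_def\<close>)
  have "(\<Sum>i\<in>Sp. \<alpha> i * exp ((real t + real s + 1) * tau d v1 (P (w(t:=i)) (Suc t)) / (300 * (real \<eta>)^2)))
      = (\<Sum>i\<in>Sp. \<alpha> i * exp ((real t + real s + 1) * taup (real \<eta> / (real t + real s)) (h i) (r i) \<tau> / (300*(real \<eta>)^2)))"
    using Pi unfolding a_def by (intro sum.cong refl) simp
  also note M
  finally show ?thesis unfolding \<tau>_def p_def .
qed

definition Seq :: "nat \<Rightarrow> (nat \<Rightarrow> nat) set" where "Seq n = PiE {..<n} (\<lambda>_. Sp)"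
definition W :: "nat \<Rightarrow> (nat \<Rightarrow> nat) \<Rightarrow> real" where "W n w = (\<Prod>t<n. \<alpha> (w t))"
definition Phi :: "(nat \<Rightarrow> nat) \<Rightarrow> nat \<Rightarrow> real" where "Phi w t = (real t + real s) * tau d v1 (P w t)"
definition Hg :: "nat \<Rightarrow> (nat \<Rightarrow> nat) \<Rightarrow> bool" where "Hg n w = (\<forall>t<n. Phi w t \<le> 2 * real s)"
definition cc :: real where "cc = 300 * (real \<eta>)^2"
definition Y :: "nat \<Rightarrow> real" where
  "Y n = (\<Sum>w\<in>Seq n. W n w * (if Hg n w then exp (Phi w n / cc) else 0))"
definition Bad :: "nat \<Rightarrow> real" where
  "Bad n = (\<Sum>w\<in>Seq n. W n w * (if Hg n w then 0 else 1))"

lemma cc_pos: "0 < cc" unfolding cc_def using eta1 by simp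

lemma fin_Seq: "finite (Seq n)" unfolding Seq_def using fin_Sp by (simp add: finite_PiE)

lemma Seq_mem: "w \<in> Seq n \<Longrightarrow> k < n \<Longrightarrow> w k \<in> Sp" unfolding Seq_def by auto

lemma W_nonneg: "w \<in> Seq n \<Longrightarrow> 0 \<le> W n w"
  unfolding W_def using Seq_mem \<alpha>0 by (intro prod_nonneg) (auto simp: Sp_def)

lemma sum_Seq_Suc: "(\<Sum>w\<in>Seq (Suc n). f w) = (\<Sum>w\<in>Seq n. \<Sum>i\<in>Sp. f (w(n:=i)))"
proof -
  have eq: "Seq (Suc n) = (\<lambda>(y, g). g(n := y)) ` (Sp \<times> Seq n)"
    unfolding Seq_def lessThan_Suc by (rule PiE_insert_eq)
  have inj: "inj_on (\<lambda>(y, g). g(n := y)) (Sp \<times> Seq n)"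
    unfolding Seq_def by (rule inj_combinator) simp
  have "(\<Sum>w\<in>Seq (Suc n). f w) = (\<Sum>(y,g)\<in>Sp \<times> Seq n. f (g(n:=y)))"
    unfolding eq by (subst sum.reindex[OF inj]) (simp add: case_prod_beta')
  also have "\<dots> = (\<Sum>y\<in>Sp. \<Sum>g\<in>Seq n. f (g(n:=y)))"
    by (rule sum.cartesian_product[symmetric])
  also have "\<dots> = (\<Sum>g\<in>Seq n. \<Sum>y\<in>Sp. f (g(n:=y)))" by (rule sum.swap)
  finally show ?thesis .
qed

lemma W_upd: "W (Suc n) (w(n:=i)) = W n w * \<alpha> i"
  unfolding W_def by simp

lemma Phi_upd: "t \<le> n \<Longrightarrow> Phi (w(n:=i)) t = Phi w t"
  unfolding Phi_def by (simp add: pref_cong[of t "w(n:=i)" w])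

lemma Hg_upd: "Hg (Suc n) (w(n:=i)) = (Hg n w \<and> Phi w n \<le> 2 * real s)"
  unfolding Hg_def using Phi_upd by (auto simp: less_Suc_eq)

lemma mass: "(\<Sum>w\<in>Seq n. W n w) = 1"
proof -
  have "(\<Sum>w\<in>Seq n. W n w) = (\<Prod>t<n. \<Sum>i\<in>Sp. \<alpha> i)"
    unfolding Seq_def W_def using prod_sum_PiE[of "{..<n}" "\<lambda>_. Sp" "\<lambda>_ i. \<alpha> i"] fin_Sp by simp
  thus ?thesis using sumSp1 by simp
qed

lemma Y_step: "Y (Suc n) \<le> exp (2/(real n + real s)) * Y n"
proof -
  have "Y (Suc n) = (\<Sum>w\<in>Seq n. \<Sum>i\<in>Sp. W n w * \<alpha> i *
      (if Hg n w \<and> Phi w n \<le> 2 * real s then exp (Phi (w(n:=i)) (Suc n) / cc) else 0))"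
    unfolding Y_def sum_Seq_Suc W_upd Hg_upd ..
  also have "\<dots> = (\<Sum>w\<in>Seq n. W n w * (if Hg n w \<and> Phi w n \<le> 2 * real s then
        (\<Sum>i\<in>Sp. \<alpha> i * exp (Phi (w(n:=i)) (Suc n) / cc)) else 0))"
    by (intro sum.cong refl) (auto simp: sum_distrib_left mult_ac)
  also have "\<dots> \<le> (\<Sum>w\<in>Seq n. W n w * (if Hg n w then exp (Phi w n / cc) * exp (2/(real n + real s)) else 0))"
  proof (intro sum_mono mult_left_mono)
    fix w assume w: "w \<in> Seq n"
    show "0 \<le> W n w" using W_nonneg[OF w] .
    show "(if Hg n w \<and> Phi w n \<le> 2 * real s then (\<Sum>i\<in>Sp. \<alpha> i * exp (Phi (w(n:=i)) (Suc n) / cc)) else 0)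
        \<le> (if Hg n w then exp (Phi w n / cc) * exp (2/(real n + real s)) else 0)"
    proof (cases "Hg n w \<and> Phi w n \<le> 2 * real s")
      case True
      have tb: "tau d v1 (P w n) \<le> 2"
      proof -
        have "(real n + real s) * tau d v1 (P w n) \<le> 2 * real s" using True unfolding Phi_def by simp
        also have "\<dots> \<le> 2 * (real n + real s)" by simp
        also have "\<dots> = (real n + real s) * 2" by simp
        finally show ?thesis using s1 mult_le_cancel_left_pos[of "real n + real s" "tau d v1 (P w n)" 2] by simp
      qed
      have "(\<Sum>i\<in>Sp. \<alpha> i * exp (Phi (w(n:=i)) (Suc n) / cc))
          = (\<Sum>i\<in>Sp. \<alpha> i * exp ((real n + real s + 1) * tau d v1 (P (w(n:=i)) (Suc n)) / (300 * (real \<eta>)^2)))"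
        unfolding Phi_def cc_def by (simp add: add_ac)
      also have "\<dots> \<le> exp ((real n + real s) * tau d v1 (P w n) / (300*(real \<eta>)^2) + 2/(real n + real s))"
        by (rule step_mgf[OF Seq_mem[OF w] tb])
      also have "\<dots> = exp (Phi w n / cc) * exp (2/(real n + real s))"
        unfolding Phi_def cc_def by (simp add: exp_add)
      finally show ?thesis using True by simp
    next
      case False thus ?thesis by simp
    qed
  qed
  also have "\<dots> = exp (2/(real n + real s)) * Y n"
    unfolding Y_def sum_distrib_left by (intro sum.cong refl) (simp add: mult_ac)
  finally show ?thesis .
qed

lemma Bad_step: "Bad (Suc n) \<le> Bad n + exp (- 2 * real s / cc) * Y n"
proof -
  have "Bad (Suc n) = (\<Sum>w\<in>Seq n. \<Sum>i\<in>Sp. W n w * \<alpha> i *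
      (if Hg n w \<and> Phi w n \<le> 2 * real s then 0 else 1))"
    unfolding Bad_def sum_Seq_Suc W_upd Hg_upd ..
  also have "\<dots> = (\<Sum>w\<in>Seq n. W n w * (if Hg n w \<and> Phi w n \<le> 2 * real s then 0 else 1))"
    by (intro sum.cong refl) (simp add: sum_distrib_left[symmetric] sum_distrib_right[symmetric] sumSp1)
  also have "\<dots> \<le> (\<Sum>w\<in>Seq n. W n w * ((if Hg n w then 0 else 1) +
       exp (- 2 * real s / cc) * (if Hg n w then exp (Phi w n / cc) else 0)))"
  proof (intro sum_mono mult_left_mono)
    fix w assume w: "w \<in> Seq n"
    show "0 \<le> W n w" using W_nonneg[OF w] .
    show "(if Hg n w \<and> Phi w n \<le> 2 * real s then 0 else 1) \<le> (if Hg n w then 0 else 1) +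
       exp (- 2 * real s / cc) * (if Hg n w then exp (Phi w n / cc) else 0)"
    proof (cases "Hg n w")
      case True
      show ?thesis
      proof (cases "Phi w n \<le> 2 * real s")
        case True2: True thus ?thesis using True by simp
      next
        case False
        have "0 \<le> (Phi w n - 2 * real s) / cc" using False cc_pos by simp
        hence "1 \<le> exp ((Phi w n - 2 * real s) / cc)" by simp
        also have "\<dots> = exp (- 2 * real s / cc) * exp (Phi w n / cc)"
          by (simp add: exp_add[symmetric] diff_divide_distrib)
        finally show ?thesis using True False by simp
      qed
    next
      case False thus ?thesis by simp
    qed
  qed
  also have "\<dots> = Bad n + exp (- 2 * real s / cc) * Y n"
    unfolding Bad_def Y_def by (simp add: sum.distrib sum_distrib_left algebra_simps)
  finally show ?thesis .
qed

lemma tau0_le1: "tau d v1 p0 \<le> 1"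
proof -
  have cpos: "0 < ip d p0 v1" using c0 sqrt2 ip_sym[of d v1 p0] by linarith
  have "(sqrt 2 / 2)^2 \<le> (ip d p0 v1)^2" using c0 sqrt2 ip_sym[of d v1 p0] by (intro power_mono) auto
  hence h: "1/2 \<le> (ip d p0 v1)^2" by (simp add: power_divide)
  have "(1 - (ip d p0 v1)^2) \<le> (ip d p0 v1)^2" using h by simp
  thus ?thesis unfolding tau_def using cpos by (simp add: divide_le_eq)
qed

lemma Y0: "Y 0 \<le> exp (real s / cc)"
proof -
  have "Seq 0 = {\<lambda>_. undefined}" unfolding Seq_def by simp
  hence "Y 0 = exp (Phi (\<lambda>_. undefined) 0 / cc)" unfolding Y_def W_def Hg_def by simp
  also have "\<dots> \<le> exp (real s / cc)"
  proof -
    have "Phi (\<lambda>_. undefined) 0 = real s * tau d v1 p0" unfolding Phi_def by simp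
    also have "\<dots> \<le> real s * 1" using tau0_le1 by (intro mult_left_mono) auto
    finally show ?thesis using cc_pos by (simp add: divide_right_mono)
  qed
  finally show ?thesis .
qed

lemma Y_bound: "Y n \<le> exp (real s / cc + (\<Sum>k<n. 2/(real k + real s)))"
proof (induction n)
  case 0 thus ?case using Y0 by simp
next
  case (Suc n)
  have "Y (Suc n) \<le> exp (2/(real n + real s)) * Y n" by (rule Y_step)
  also have "\<dots> \<le> exp (2/(real n + real s)) * exp (real s / cc + (\<Sum>k<n. 2/(real k + real s)))"
    using Suc by (intro mult_left_mono) auto
  also have "\<dots> = exp (real s / cc + (\<Sum>k<Suc n. 2/(real k + real s)))"
    by (simp add: exp_add[symmetric] add_ac)
  finally show ?case .
qed

lemma Bad_bound: "Bad n \<le> real n * exp (- real s / cc + (\<Sum>k<n. 2/(real k + real s)))"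
proof (induction n)
  case 0 thus ?case unfolding Bad_def Seq_def Hg_def by simp
next
  case (Suc n)
  have mono: "(\<Sum>k<n. 2/(real k + real s)) \<le> (\<Sum>k<Suc n. 2/(real k + real s))"
    by (simp add: s1)
  have "Bad (Suc n) \<le> Bad n + exp (- 2 * real s / cc) * Y n" by (rule Bad_step)
  also have "\<dots> \<le> real n * exp (- real s / cc + (\<Sum>k<n. 2/(real k + real s)))
        + exp (- 2 * real s / cc) * exp (real s / cc + (\<Sum>k<n. 2/(real k + real s)))"
    using Suc Y_bound[of n] by (intro add_mono mult_left_mono) auto
  also have "exp (- 2 * real s / cc) * exp (real s / cc + (\<Sum>k<n. 2/(real k + real s)))
        = exp (- real s / cc + (\<Sum>k<n. 2/(real k + real s)))"
    by (simp add: exp_add[symmetric] field_simps)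
  also have "real n * exp (- real s / cc + (\<Sum>k<n. 2/(real k + real s))) + exp (- real s / cc + (\<Sum>k<n. 2/(real k + real s)))
      \<le> real n * exp (- real s / cc + (\<Sum>k<Suc n. 2/(real k + real s))) + exp (- real s / cc + (\<Sum>k<Suc n. 2/(real k + real s)))"
    using mono by (intro add_mono mult_left_mono) auto
  finally show ?case by (simp add: algebra_simps)
qed

lemma good_mass: "(\<Sum>w\<in>{w\<in>Seq n. Hg n w}. W n w) = 1 - Bad n"
proof -
  have b: "Bad n = (\<Sum>w\<in>Seq n. if \<not> Hg n w then W n w else 0)"
    unfolding Bad_def by (intro sum.cong) auto
  have "(\<Sum>w\<in>Seq n. W n w) = (\<Sum>w\<in>Seq n. (if Hg n w then W n w else 0) + (if \<not> Hg n w then W n w else 0))"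
    by (intro sum.cong) auto
  also have "\<dots> = (\<Sum>w\<in>{w\<in>Seq n. Hg n w}. W n w) + Bad n"
    unfolding sum.distrib b by (simp add: sum.inter_filter[OF fin_Seq])
  finally show ?thesis using mass by simp
qed

end


lemma harm1: "0 < s \<Longrightarrow> (\<Sum>k<T. 1/(real k + s + 1)) \<le> ln ((real T + s)/s)"
proof (induction T)
  case 0 thus ?case by simp
next
  case (Suc T)
  have pos: "0 < real T + s" using Suc.prems by simp
  have "ln ((real T + s)/(real T + s + 1)) \<le> (real T + s)/(real T + s + 1) - 1"
    using pos by (intro ln_le_minus_one) simp
  also have "\<dots> = - (1/(real T + s + 1))" using pos by (simp add: field_simps)
  finally have k: "1/(real T + s + 1) \<le> ln ((real T + s + 1)/(real T + s))"
    using pos by (simp add: ln_div)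
  have "(\<Sum>k<Suc T. 1/(real k + s + 1)) = (\<Sum>k<T. 1/(real k + s + 1)) + 1/(real T + s + 1)" by simp
  also have "\<dots> \<le> ln ((real T + s)/s) + ln ((real T + s + 1)/(real T + s))"
    using Suc k by linarith
  also have "\<dots> = ln ((real (Suc T) + s)/s)"
    using pos Suc.prems by (simp add: ln_div add_ac)
  finally show ?case .
qed

lemma harm: "0 < s \<Longrightarrow> (\<Sum>k<T. 1/(real k + s)) \<le> 1/s + ln ((real T + s)/s)"
proof (cases T)
  case 0
  assume s: "0 < s"
  thus ?thesis using 0 by simp
next
  case (Suc m)
  assume s: "0 < s"
  have "(\<Sum>k<T. 1/(real k + s)) = 1/s + (\<Sum>k<m. 1/(real k + s + 1))"
    unfolding Suc sum.lessThan_Suc_shift by (simp add: add_ac)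
  also have "\<dots> \<le> 1/s + ln ((real m + s)/s)" using harm1[OF s, of m] by simp
  also have "\<dots> \<le> 1/s + ln ((real T + s)/s)"
  proof -
    have a: "0 < (real m + s)/s" using s by simp
    have "(real m + s)/s \<le> (real T + s)/s" using s Suc by (intro divide_right_mono) auto
    thus ?thesis using a by simp
  qed
  finally show ?thesis .
qed

context oja begin

lemma term_bound:
  assumes w: "\<And>k. k < t \<Longrightarrow> w k \<in> Sp" and ph: "Phi w t \<le> 2 * real s"
  shows "1 - ip d (P w t) p0 \<le> 2 * real s / (real t + real s) + vnorm d (\<lambda>i. v1 i - p0 i)"
proof -
  define p where "p = P w t"
  define c where "c = ip d p v1"
  define z where "z = (\<lambda>i. v1 i - p0 i)"
  have inv: "ip d p p = 1" "0 < c" using invariant[OF w] unfolding p_def c_def by auto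
  have c1: "c \<le> 1" using abs_ip_le1[OF inv(1) vv] unfolding c_def by simp
  have "(ip d p z)^2 \<le> ip d z z" using ip_CS[of d p z] inv(1) by simp
  also have "\<dots> = (vnorm d z)^2" by (simp add: vnorm_sq)
  finally have "\<bar>ip d p z\<bar> \<le> \<bar>vnorm d z\<bar>" by (simp add: abs_le_square_iff)
  hence pz: "\<bar>ip d p z\<bar> \<le> vnorm d z" using vnorm_nonneg by simp
  have ipp0: "ip d p p0 = c - ip d p z" unfolding z_def ip_diff_right c_def by simp
  have tau_eq: "tau d v1 p = (1 - c^2)/c^2" unfolding tau_def c_def ..
  have "1 - c \<le> 1 - c^2" using inv(2) c1 by (simp add: power2_eq_square mult_le_cancel_left1)
  also have "1 - c^2 \<le> (1 - c^2)/c^2"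
  proof -
    have "c^2 \<le> 1" using inv(2) c1 by (simp add: power_le_one)
    moreover have "0 < c^2" using inv(2) by simp
    moreover have "0 \<le> 1 - c^2" using \<open>c^2 \<le> 1\<close> by simp
    ultimately show ?thesis using mult_left_le[of "c^2" "1-c^2"] by (simp add: le_divide_eq)
  qed
  also have "\<dots> = tau d v1 p" using tau_eq by simp
  also have "\<dots> \<le> 2 * real s / (real t + real s)"
  proof -
    have pos: "0 < real t + real s" using s1 by simp
    have "(real t + real s) * tau d v1 p \<le> 2 * real s" using ph unfolding Phi_def p_def .
    thus ?thesis using pos by (simp add: le_divide_eq mult.commute)
  qed
  finally have "1 - c \<le> 2 * real s / (real t + real s)" .
  thus ?thesis using ipp0 pz unfolding p_def z_def by linarith
qed

lemma good_regret:
  assumes w: "w \<in> Seq T" and hg: "Hg T w"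
  shows "regret d q p0 \<eta> s w T \<le> 4 * exp 2 * (real s + 2) * (1 + ln ((real T + real s) / real s))
                + real T * vnorm d (\<lambda>i. v1 i - p0 i)"
proof -
  have "regret d q p0 \<eta> s w T \<le> (\<Sum>t<T. 2 * real s / (real t + real s) + vnorm d (\<lambda>i. v1 i - p0 i))"
    unfolding regret_def
  proof (rule sum_mono)
    fix t assume t: "t \<in> {..<T}"
    show "1 - ip d (P w t) p0 \<le> 2 * real s / (real t + real s) + vnorm d (\<lambda>i. v1 i - p0 i)"
      by (rule term_bound) (use Seq_mem[OF w] t hg in \<open>auto simp: Hg_def\<close>)
  qed
  also have "\<dots> = 2 * real s * (\<Sum>t<T. 1 / (real t + real s)) + real T * vnorm d (\<lambda>i. v1 i - p0 i)"
    by (simp add: sum.distrib sum_distrib_left)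
  also have "\<dots> \<le> 2 * real s * (1 / real s + ln ((real T + real s) / real s)) + real T * vnorm d (\<lambda>i. v1 i - p0 i)"
    using harm[of "real s" T] s1 by (intro add_mono mult_left_mono) auto
  also have "2 * real s * (1 / real s + ln ((real T + real s) / real s)) \<le> 4 * exp 2 * (real s + 2) * (1 + ln ((real T + real s) / real s))"
  proof -
    define l where "l = ln ((real T + real s) / real s)"
    have l0: "0 \<le> l" unfolding l_def using s1 by simp
    have "2 * real s * (1 / real s + l) = 2 + 2 * real s * l" using s1 by (simp add: field_simps)
    also have "\<dots> \<le> 4 * 1 * (real s + 2) * (1 + l)" using l0 by (simp add: algebra_simps)
    also have "\<dots> \<le> 4 * exp 2 * (real s + 2) * (1 + l)" using l0 by (intro mult_right_mono) auto
    finally show ?thesis unfolding l_def .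
  qed
  finally show ?thesis by simp
qed

lemma main_prob:
  fixes D :: "nat pmf" and T :: nat
  assumes pmfD: "\<forall>i<N. pmf D i = \<alpha> i"
  shows "measure (PiM UNIV (\<lambda>_::nat. measure_pmf D))
        {\<omega> \<in> space (PiM UNIV (\<lambda>_::nat. measure_pmf D)).
           regret d q p0 \<eta> s \<omega> T
             \<le> 4 * exp 2 * (real s + 2) * (1 + ln ((real T + real s) / real s))
                + real T * vnorm d (\<lambda>i. v1 i - p0 i)}
        \<ge> 1 - real T * exp (- real s / cc + (\<Sum>k<T. 2/(real k + real s)))"
proof -
  let ?G = "{w\<in>Seq T. Hg T w}"
  have "measure (PiM UNIV (\<lambda>_::nat. measure_pmf D))
        {\<omega> \<in> space (PiM UNIV (\<lambda>_::nat. measure_pmf D)).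
           regret d q p0 \<eta> s \<omega> T
             \<le> 4 * exp 2 * (real s + 2) * (1 + ln ((real T + real s) / real s))
                + real T * vnorm d (\<lambda>i. v1 i - p0 i)} \<ge> (\<Sum>w\<in>?G. \<Prod>t<T. pmf D (w t))"
  proof (rule prob_lower)
    fix \<omega> \<omega>' :: "nat \<Rightarrow> nat" assume h: "\<forall>t<T. \<omega> t = \<omega>' t"
    show "regret d q p0 \<eta> s \<omega> T = regret d q p0 \<eta> s \<omega>' T"
      unfolding regret_def
      by (intro sum.cong refl arg_cong[where f="\<lambda>x. 1 - ip d x p0"] pref_cong) (use h in auto)
  next
    show "finite ?G" using fin_Seq by simp
    show "?G \<subseteq> PiE {..<T} (\<lambda>_. UNIV)" unfolding Seq_def by (auto simp: PiE_def)
  next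
    fix w assume "w \<in> ?G"
    thus "regret d q p0 \<eta> s w T \<le> 4 * exp 2 * (real s + 2) * (1 + ln ((real T + real s) / real s))
                + real T * vnorm d (\<lambda>i. v1 i - p0 i)" using good_regret by blast
  qed
  also have "(\<Sum>w\<in>?G. \<Prod>t<T. pmf D (w t)) = (\<Sum>w\<in>?G. W T w)"
    unfolding W_def using Seq_mem pmfD by (intro sum.cong refl prod.cong) (auto simp: Sp_def)
  also have "\<dots> = 1 - Bad T" by (rule good_mass)
  finally show ?thesis using Bad_bound[of T] by linarith
qed

end


lemma mulv_diff: "mulv d (\<lambda>a b. A a b - B a b) x = (\<lambda>i. mulv d A x i - mulv d B x i)"
  unfolding mulv_def by (auto simp: algebra_simps sum_subtractf)

lemma mulv_bound:
  assumes "ip d x x \<le> 1"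
  shows "vnorm d (mulv d B x) \<le> sqrt (\<Sum>i<d. \<Sum>j<d. (B i j)^2)"
proof -
  have "ip d (mulv d B x) (mulv d B x) = (\<Sum>i<d. (\<Sum>j<d. B i j * x j)^2)"
    unfolding ip_def mulv_def by (simp add: power2_eq_square)
  also have "\<dots> \<le> (\<Sum>i<d. (\<Sum>j<d. (B i j)^2) * (\<Sum>j<d. (x j)^2))"
    by (intro sum_mono Cauchy_Schwarz_ineq_sum)
  also have "\<dots> \<le> (\<Sum>i<d. (\<Sum>j<d. (B i j)^2) * 1)"
  proof (intro sum_mono mult_left_mono)
    show "(\<Sum>j<d. (x j)^2) \<le> 1" using assms unfolding ip_def by (simp add: power2_eq_square)
  qed (auto intro: sum_nonneg)
  finally show ?thesis unfolding vnorm_def by simp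
qed

lemma opnorm_ge:
  assumes x: "x \<in> vecs d" "ip d x x \<le> 1"
  shows "vnorm d (mulv d B x) \<le> opnorm d B"
proof -
  have bdd: "bdd_above {vnorm d (mulv d B x) | x. x \<in> vecs d \<and> vnorm d x \<le> 1}"
  proof (rule bdd_aboveI)
    fix y assume "y \<in> {vnorm d (mulv d B x) | x. x \<in> vecs d \<and> vnorm d x \<le> 1}"
    then obtain z where z: "y = vnorm d (mulv d B z)" "vnorm d z \<le> 1" by blast
    have "ip d z z \<le> 1"
    proof -
      have "(vnorm d z)^2 \<le> 1" using z(2) vnorm_nonneg[of d z] by (simp add: power_le_one)
      thus ?thesis by (simp add: vnorm_sq)
    qed
    thus "y \<le> sqrt (\<Sum>i<d. \<Sum>j<d. (B i j)^2)" using mulv_bound z(1) by simp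
  qed
  have "vnorm d x \<le> 1" using x(2) unfolding vnorm_def by simp
  hence "vnorm d (mulv d B x) \<in> {vnorm d (mulv d B x) | x. x \<in> vecs d \<and> vnorm d x \<le> 1}" using x(1) by blast
  thus ?thesis unfolding opnorm_def using bdd by (rule cSup_upper)
qed

lemma M_half:
  assumes d2: "2 \<le> d" and N1: "1 \<le> N" and qs: "\<forall>i<N. q i \<in> sphere_d d"
    and se: "sorted_eigenvalues d (covm N \<alpha> q) lam"
    and v1s: "v1 \<in> sphere_d d" and ev: "mulv d (covm N \<alpha> q) v1 = (\<lambda>i. lam 0 * v1 i)"
    and gap: "lam 1 < lam 0"
  shows "1/2 \<le> max (Max ((\<lambda>j. opnorm d (\<lambda>a b. outer (q j) (q j) a b - covm N \<alpha> q a b)) ` {..<N})) (lam 0)"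
proof -
  define B where "B = (\<lambda>a b. outer (q 0) (q 0) a b - covm N \<alpha> q a b)"
  have q0: "q 0 \<in> sphere_d d" using qs N1 by simp
  have q0v: "q 0 \<in> vecs d" using q0 unfolding sphere_d_def by simp
  have qq: "ip d (q 0) (q 0) = 1" using sphere_ip[OF q0] .
  have "1 - lam 0 \<le> vnorm d (mulv d B (q 0))"
  proof -
    have o: "ip d (q 0) (mulv d (outer (q 0) (q 0)) (q 0)) = 1"
    proof -
      have "ip d (q 0) (mulv d (outer (q 0) (q 0)) (q 0)) = (\<Sum>i<d. q 0 i * (q 0 i * ip d (q 0) (q 0)))"
        unfolding ip_def mulv_def outer_def by (simp add: sum_distrib_left mult_ac)
      also have "\<dots> = ip d (q 0) (q 0) * ip d (q 0) (q 0)"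
        unfolding ip_def[of d "q 0" "q 0"] by (simp add: sum_distrib_right mult_ac)
      finally show ?thesis using qq by simp
    qed
    have sb: "ip d (q 0) (mulv d (covm N \<alpha> q) (q 0)) \<le> lam 0 * ip d (q 0) (q 0)"
      by (rule spectral_bounds(1)[OF se covm_sym d2 sphere_ip[OF v1s] ev gap])
    have "ip d (q 0) (mulv d B (q 0)) = 1 - ip d (q 0) (mulv d (covm N \<alpha> q) (q 0))"
      unfolding B_def mulv_diff ip_diff_right o ..
    hence e: "1 - lam 0 \<le> ip d (q 0) (mulv d B (q 0))" using sb qq by simp
    have "(ip d (q 0) (mulv d B (q 0)))^2 \<le> (vnorm d (mulv d B (q 0)))^2"
      using ip_CS[of d "q 0" "mulv d B (q 0)"] qq by (simp add: vnorm_sq)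
    hence "\<bar>ip d (q 0) (mulv d B (q 0))\<bar> \<le> \<bar>vnorm d (mulv d B (q 0))\<bar>" by (simp add: abs_le_square_iff)
    thus ?thesis using e vnorm_nonneg[of d "mulv d B (q 0)"] by linarith
  qed
  also have "\<dots> \<le> opnorm d B" by (rule opnorm_ge[OF q0v]) (simp add: qq)
  also have "\<dots> \<le> Max ((\<lambda>j. opnorm d (\<lambda>a b. outer (q j) (q j) a b - covm N \<alpha> q a b)) ` {..<N})"
    unfolding B_def using N1 by (intro Max_ge) auto
  finally have "1 - lam 0 \<le> Max ((\<lambda>j. opnorm d (\<lambda>a b. outer (q j) (q j) a b - covm N \<alpha> q a b)) ` {..<N})" .
  thus ?thesis by linarith
qed

lemma main_thm:
  fixes d N :: nat and q :: "nat \<Rightarrow> nat \<Rightarrow> real" and \<alpha> :: "nat \<Rightarrow> real" and D :: "nat pmf"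
    and p0 :: "nat \<Rightarrow> real" and lam :: "nat \<Rightarrow> real" and v1 :: "nat \<Rightarrow> real"
    and \<eta> s T :: nat and \<delta> :: real
  assumes d2: "2 \<le> d" and N1: "1 \<le> N" and qs: "\<forall>i<N. q i \<in> sphere_d d" and "inj_on q {..<N}"
    and \<alpha>0: "\<forall>i<N. 0 \<le> \<alpha> i" and \<alpha>1: "(\<Sum>i<N. \<alpha> i) = 1" and pmfD: "\<forall>i<N. pmf D i = \<alpha> i"
    and p0s: "p0 \<in> sphere_d d" and se: "sorted_eigenvalues d (covm N \<alpha> q) lam"
    and v1s: "v1 \<in> sphere_d d" and ev: "mulv d (covm N \<alpha> q) v1 = (\<lambda>i. lam 0 * v1 i)"
    and eta1: "1 \<le> \<eta>" and s1: "1 \<le> s" and T1: "1 \<le> T" and d0: "0 < \<delta>" and d1: "\<delta> < 1"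
    and c0: "ip d v1 p0 \<ge> sqrt 2 / 2" and gap: "lam 1 < lam 0"
    and etagap: "real \<eta> \<ge> 8 / (lam 0 - lam 1)"
    and sbig: "(let M = max (Max ((\<lambda>j. opnorm d (\<lambda>a b. outer (q j) (q j) a b - covm N \<alpha> q a b)) ` {..<N}))
                   (lam 0)
       in real s \<ge> 1 + 2 * (170::real)\<^sup>2 * (real \<eta>)\<^sup>2 * M\<^sup>2 * ln (2 * 170 * M * real T * real \<eta> / \<delta>))"
    and sA: "self_aligned d q {i. i < N \<and> 0 < \<alpha> i} v1"
    and sB: "self_aligned d q {i. i < N \<and> 0 < \<alpha> i} p0"
  shows "measure (PiM UNIV (\<lambda>_::nat. measure_pmf D))
        {\<omega> \<in> space (PiM UNIV (\<lambda>_::nat. measure_pmf D)).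
           regret d q p0 \<eta> s \<omega> T
             \<le> 4 * exp 2 * (real s + 2) * (1 + ln ((real T + real s) / real s))
                + real T * vnorm d (\<lambda>i. v1 i - p0 i)}
        \<ge> 1 - \<delta>"
proof -
  define M where "M = max (Max ((\<lambda>j. opnorm d (\<lambda>a b. outer (q j) (q j) a b - covm N \<alpha> q a b)) ` {..<N})) (lam 0)"
  define L where "L = ln (2 * 170 * M * real T * real \<eta> / \<delta>)"
  have sM: "real s \<ge> 1 + 2 * (170::real)^2 * (real \<eta>)^2 * M^2 * L"
    using sbig unfolding M_def L_def Let_def by simp
  have M12: "1/2 \<le> M" unfolding M_def by (rule M_half[OF d2 N1 qs se v1s ev gap])
  have M2: "1/4 \<le> M^2"
  proof -
    have "(1/2)^2 \<le> M^2" using M12 by (intro power_mono) auto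
    thus ?thesis by (simp add: power2_eq_square)
  qed
  define A where "A = 2 * 170 * M * real \<eta>"
  have A170: "170 \<le> A"
  proof -
    have "1 \<le> 2 * M" using M12 by simp
    moreover have "1 \<le> real \<eta>" using eta1 by simp
    ultimately have "1 * 1 \<le> (2 * M) * real \<eta>" by (intro mult_mono) auto
    thus ?thesis unfolding A_def by simp
  qed
  have Tpos: "0 < real T" using T1 by simp
  have Lsplit: "L = ln A + ln (real T) - ln \<delta>"
  proof -
    have eq: "2 * 170 * M * real T * real \<eta> / \<delta> = A * real T / \<delta>" unfolding A_def by simp
    have L0: "L = ln (A * real T / \<delta>)" unfolding L_def eq ..
    have AT: "0 < A * real T" using A170 Tpos by simp
    have "ln (A * real T / \<delta>) = ln (A * real T) - ln \<delta>" using AT d0 A170 T1 by (simp add: ln_div)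
    also have "ln (A * real T) = ln A + ln (real T)" using A170 Tpos by (simp add: ln_mult)
    finally show ?thesis using L0 by simp
  qed
  have lnA: "1 \<le> ln A"
  proof -
    have "exp 1 \<le> (3::real)" by (rule exp_le)
    hence "exp 1 \<le> A" using A170 by simp
    thus ?thesis using A170 by (simp add: ln_ge_iff)
  qed
  have lnT: "0 \<le> ln (real T)" using T1 by simp
  have lnd: "ln \<delta> < 0" using d0 d1 by simp
  have L1: "1 + ln (real T) - ln \<delta> \<le> L" using Lsplit lnA by linarith
  have Lge1: "1 \<le> L" using L1 lnT lnd by linarith
  have sL: "real s \<ge> 14450 * (real \<eta>)^2 * L"
  proof -
    define Z where "Z = (real \<eta>)^2 * L"
    have Z0: "0 \<le> Z" unfolding Z_def using Lge1 by simp
    have k: "Z * (1/4) \<le> Z * M^2" using M2 Z0 by (intro mult_left_mono) auto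
    have e1: "2 * (170::real)^2 * (real \<eta>)^2 * M^2 * L = 57800 * (Z * M^2)"
      unfolding Z_def by (simp add: algebra_simps)
    have e2: "14450 * (real \<eta>)^2 * L = 57800 * (Z * (1/4))"
      unfolding Z_def by (simp add: algebra_simps)
    show ?thesis using sM k unfolding e1 e2 by linarith
  qed
  have small: "real \<eta> / real s \<le> 1/1000"
  proof -
    have "1000 * real \<eta> \<le> 14450 * (real \<eta>)^2 * L"
    proof -
      have "real \<eta> \<le> (real \<eta>)^2" using eta1 by (simp add: power2_eq_square)
      hence "1000 * real \<eta> \<le> 14450 * (real \<eta>)^2 * 1" using eta1 by linarith
      also have "\<dots> \<le> 14450 * (real \<eta>)^2 * L" using Lge1 by (intro mult_left_mono) auto
      finally show ?thesis .
    qed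
    hence "1000 * real \<eta> \<le> real s" using sL by linarith
    thus ?thesis using s1 by (simp add: divide_le_eq)
  qed
  interpret oja d N q \<alpha> lam v1 p0 \<eta> s
    by unfold_locales (use assms small in auto)
  note mp = main_prob[OF pmfD, of T]
  define E where "E = - real s / cc + (\<Sum>k<T. 2/(real k + real s))"
  have H: "(\<Sum>k<T. 2/(real k + real s)) \<le> 4 + 2 * ln (real T)"
  proof -
    have "(\<Sum>k<T. 2/(real k + real s)) = 2 * (\<Sum>k<T. 1/(real k + real s))"
      by (simp add: sum_distrib_left)
    also have "\<dots> \<le> 2 * (1/real s + ln ((real T + real s)/real s))"
      using harm[of "real s" T] s1 by simp
    also have "\<dots> \<le> 2 * (1 + (1 + ln (real T)))"
    proof -
      have a: "1/real s \<le> 1" using s1 by simp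
      have b1: "(real T + real s)/real s \<le> 2 * real T"
      proof -
        have "(real T + real s)/real s = real T / real s + 1" using s1 by (simp add: field_simps)
        also have "\<dots> \<le> real T + 1" using s1 Tpos by (simp add: divide_le_eq mult_le_cancel_left1)
        also have "\<dots> \<le> 2 * real T" using T1 by simp
        finally show ?thesis .
      qed
      have b0: "0 < (real T + real s)/real s" using s1 by simp
      have "ln ((real T + real s)/real s) \<le> ln (2 * real T)" using b1 b0 by simp
      also have "\<dots> = ln 2 + ln (real T)" using Tpos by (simp add: ln_mult)
      also have "\<dots> \<le> 1 + ln (real T)" using ln_2_less_1 by simp
      finally show ?thesis using a by simp
    qed
    finally show ?thesis by simp
  qed
  have scc: "48 * L \<le> real s / cc"
  proof -
    have "real s / cc \<ge> 14450 * (real \<eta>)^2 * L / (300 * (real \<eta>)^2)"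
      unfolding cc_def using sL eta1 by (intro divide_right_mono) auto
    moreover have "14450 * (real \<eta>)^2 * L / (300 * (real \<eta>)^2) = 14450 / 300 * L" using eta1 by simp
    moreover have "48 * L \<le> 14450 / 300 * L" using Lge1 by simp
    ultimately show ?thesis by linarith
  qed
  have "ln (real T) + E \<le> ln \<delta>"
    unfolding E_def using H scc L1 lnT lnd by linarith
  hence "exp (ln (real T) + E) \<le> exp (ln \<delta>)" by simp
  hence "real T * exp E \<le> \<delta>" using Tpos d0 by (simp add: exp_add)
  thus ?thesis using mp unfolding E_def by linarith
qed


theorem corollary3:
  "\<exists>C::real. 0 < C \<and> C < 175 \<and>
    (\<forall>(d::nat) (N::nat) (q::nat \<Rightarrow> nat \<Rightarrow> real) (\<alpha>::nat \<Rightarrow> real) (D::nat pmf)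
       (p0::nat \<Rightarrow> real) (lam::nat \<Rightarrow> real) (v1::nat \<Rightarrow> real)
       (\<eta>::nat) (s::nat) (T::nat) (\<delta>::real).
      2 \<le> d \<and> 1 \<le> N \<and>
      (\<forall>i<N. q i \<in> sphere_d d) \<and> inj_on q {..<N} \<and>
      (\<forall>i<N. 0 \<le> \<alpha> i) \<and> (\<Sum>i<N. \<alpha> i) = 1 \<and>
      (\<forall>i<N. pmf D i = \<alpha> i) \<and>
      p0 \<in> sphere_d d \<and>
      sorted_eigenvalues d (covm N \<alpha> q) lam \<and>
      v1 \<in> sphere_d d \<and> mulv d (covm N \<alpha> q) v1 = (\<lambda>i. lam 0 * v1 i) \<and>
      1 \<le> \<eta> \<and> 1 \<le> s \<and> 1 \<le> T \<and> 0 < \<delta> \<and> \<delta> < 1 \<and>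
      ip d v1 p0 \<ge> sqrt 2 / 2 \<and>
      lam 1 < lam 0 \<and>
      real \<eta> \<ge> 8 / (lam 0 - lam 1) \<and>
      (let M = max (Max ((\<lambda>j. opnorm d (\<lambda>a b. outer (q j) (q j) a b - covm N \<alpha> q a b)) ` {..<N}))
                   (lam 0)
       in real s \<ge> 1 + 2 * C\<^sup>2 * (real \<eta>)\<^sup>2 * M\<^sup>2 * ln (2 * C * M * real T * real \<eta> / \<delta>)) \<and>
      self_aligned d q {i. i < N \<and> 0 < \<alpha> i} v1 \<and>
      self_aligned d q {i. i < N \<and> 0 < \<alpha> i} p0
      \<longrightarrow>
      measure (PiM UNIV (\<lambda>_::nat. measure_pmf D))
        {\<omega> \<in> space (PiM UNIV (\<lambda>_::nat. measure_pmf D)).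
           regret d q p0 \<eta> s \<omega> T
             \<le> 4 * exp 2 * (real s + 2) * (1 + ln ((real T + real s) / real s))
                + real T * vnorm d (\<lambda>i. v1 i - p0 i)}
        \<ge> 1 - \<delta>)"
  apply (rule exI[of _ "170::real"])
  apply (intro conjI allI impI)
    apply simp
   apply simp
  apply (elim conjE)
  apply (rule main_thm)
                      apply assumption+
  done

end
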